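(* Each member of $\mathcal{G}_3$ is cycle-extendable.
   Context: A half biwheel is obtained from a path $P$ of even length (possibly a single vertex) with color classes $A,B$, whose ends $u,v$ lie in $A$, by adding a new vertex $h$ (the hub) adjacent to every vertex of $A$; $u,v$ are the corners (if $P$ is a single vertex the result is $K_2$ and $u=v$). $\mathcal{G}_3$ (hexagon half biwheels) consists of the graphs obtained from the disjoint union of a $6$-cycle $a_0a_1a_2a_3a_4a_5a_0$ and a half biwheel $H_1$ with hub $h_1$ and corners $u_1,v_1$ by adding the edges $h_1a_4$, $v_1a_1$, $a_3h_1$ and $a_0u_1$. A matching covered graph (connected, at least two vertices, every edge in a perfect matching) is cycle-extendable if for every even cycle $C$ the graph $G-V(C)$ has a perfect matching. *)

theory Defs
  imports Main
begin

definition simple_graph :: "'a set \<Rightarrow> 'a set set \<Rightarrow> bool" where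
  "simple_graph V E \<longleftrightarrow> finite V \<and> (\<forall>e\<in>E. \<exists>x y. x \<noteq> y \<and> x \<in> V \<and> y \<in> V \<and> e = {x, y})"

definition perfect_matching :: "'a set \<Rightarrow> 'a set set \<Rightarrow> 'a set set \<Rightarrow> bool" where
  "perfect_matching V E M \<longleftrightarrow> M \<subseteq> E \<and> (\<forall>v\<in>V. \<exists>!e. e \<in> M \<and> v \<in> e)"

definition has_perfect_matching :: "'a set \<Rightarrow> 'a set set \<Rightarrow> bool" where
  "has_perfect_matching V E \<longleftrightarrow> (\<exists>M. perfect_matching V E M)"

definition graph_connected :: "'a set \<Rightarrow> 'a set set \<Rightarrow> bool" where
  "graph_connected V E \<longleftrightarrow>
     (\<forall>x\<in>V. \<forall>y\<in>V. (\<lambda>a b. {a, b} \<in> E)\<^sup>*\<^sup>* x y)"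

definition matching_covered :: "'a set \<Rightarrow> 'a set set \<Rightarrow> bool" where
  "matching_covered V E \<longleftrightarrow> simple_graph V E \<and> graph_connected V E \<and> card V \<ge> 2 \<and>
     (\<forall>e\<in>E. \<exists>M. perfect_matching V E M \<and> e \<in> M)"

definition is_cycle :: "'a set \<Rightarrow> 'a set set \<Rightarrow> 'a list \<Rightarrow> bool" where
  "is_cycle V E cs \<longleftrightarrow> length cs \<ge> 3 \<and> distinct cs \<and> set cs \<subseteq> V \<and>
     (\<forall>i < length cs. {cs ! i, cs ! ((i + 1) mod length cs)} \<in> E)"

definition even_cycle :: "'a set \<Rightarrow> 'a set set \<Rightarrow> 'a list \<Rightarrow> bool" where
  "even_cycle V E cs \<longleftrightarrow> is_cycle V E cs \<and> even (length cs)"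

definition del_verts_E :: "'a set set \<Rightarrow> 'a set \<Rightarrow> 'a set set" where
  "del_verts_E E S = {e \<in> E. e \<inter> S = {}}"

definition cycle_extendable :: "'a set \<Rightarrow> 'a set set \<Rightarrow> bool" where
  "cycle_extendable V E \<longleftrightarrow> matching_covered V E \<and>
     (\<forall>cs. even_cycle V E cs \<longrightarrow> has_perfect_matching (V - set cs) (del_verts_E E (set cs)))"

text \<open>The path P has vertices
  PV 0, ..., PV (2k), colour class A = even indices, corners u1 = PV 0, v1 = PV (2k),
  hub HB, hexagon a_i = CV i (i < 6).\<close>

datatype g3v = CV nat | PV nat | HB

definition g3_V :: "nat \<Rightarrow> g3v set" where
  "g3_V k = {CV i | i. i < 6} \<union> {PV j | j. j \<le> 2 * k} \<union> {HB}"

definition g3_E :: "nat \<Rightarrow> g3v set set" where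
  "g3_E k =
     {{CV i, CV ((i + 1) mod 6)} | i. i < 6}
   \<union> {{PV j, PV (j + 1)} | j. j < 2 * k}
   \<union> {{HB, PV (2 * j)} | j. j \<le> k}
   \<union> {{HB, CV 4}, {PV (2 * k), CV 1}, {CV 3, HB}, {CV 0, PV 0}}"

definition in_G3 :: "'a set \<Rightarrow> 'a set set \<Rightarrow> bool" where
  "in_G3 V E \<longleftrightarrow> (\<exists>k f. bij_betw f (g3_V k) V \<and> E = (\<lambda>e. f ` e) ` g3_E k)"

end

theory Submission
  imports Defs
begin

definition nxt :: "nat \<Rightarrow> nat \<Rightarrow> nat" where
  "nxt n i = (if i + 1 = n then 0 else i + 1)"

definition prv :: "nat \<Rightarrow> nat \<Rightarrow> nat" where
  "prv n i = (if i = 0 then n - 1 else i - 1)"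

lemma mod_nxt: "i < n \<Longrightarrow> (i + 1) mod n = nxt n i"
  by (auto simp: nxt_def)

lemma mod_nxt': "i < n \<Longrightarrow> Suc i mod n = nxt n i"
  by (auto simp: nxt_def)

lemma nxt_lt: "i < n \<Longrightarrow> nxt n i < n"
  by (auto simp: nxt_def)

lemma prv_lt: "i < n \<Longrightarrow> prv n i < n"
  by (auto simp: prv_def)

lemma nxt_prv: "i < n \<Longrightarrow> nxt n (prv n i) = i"
  by (auto simp: nxt_def prv_def)

lemma prv_nxt: "i < n \<Longrightarrow> prv n (nxt n i) = i"
  by (auto simp: nxt_def prv_def)

lemma nxt_nxt: "i < n \<Longrightarrow> 3 \<le> n \<Longrightarrow> nxt n (nxt n i) \<noteq> i"
  by (auto simp: nxt_def)

lemma nxt_prv_ne: "i < n \<Longrightarrow> 3 \<le> n \<Longrightarrow> nxt n i \<noteq> prv n i"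
  by (auto simp: nxt_def prv_def)

definition cedges :: "'a list \<Rightarrow> 'a set set" where
  "cedges cs = {{cs ! i, cs ! nxt (length cs) i} | i. i < length cs}"

lemma cyc_E: "is_cycle V E cs \<Longrightarrow> cedges cs \<subseteq> E"
  unfolding is_cycle_def cedges_def by (auto simp: mod_nxt')

lemma cyc_nbrs:
  assumes "is_cycle V E cs" "v \<in> set cs"
  shows "\<exists>x y. x \<noteq> y \<and> {v,x} \<in> cedges cs \<and> {v,y} \<in> cedges cs \<and>
     (\<forall>z. {v,z} \<in> cedges cs \<longrightarrow> z = x \<or> z = y)"
proof -
  let ?n = "length cs"
  have n3: "3 \<le> ?n" and d: "distinct cs" using assms(1) by (auto simp: is_cycle_def)
  obtain i where i: "i < ?n" "cs ! i = v" using assms(2) by (auto simp: in_set_conv_nth)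
  define x where "x = cs ! nxt ?n i"
  define y where "y = cs ! prv ?n i"
  have "x \<noteq> y" unfolding x_def y_def
    using nth_eq_iff_index_eq[OF d] nxt_lt[OF i(1)] prv_lt[OF i(1)] nxt_prv_ne[OF i(1) n3] by auto
  moreover have "{v,x} \<in> cedges cs" unfolding cedges_def x_def using i by auto
  moreover have "{v,y} \<in> cedges cs" unfolding cedges_def y_def using i prv_lt[OF i(1)] nxt_prv[OF i(1)]
    by (auto intro!: exI[of _ "prv ?n i"] simp: insert_commute)
  moreover have "\<forall>z. {v,z} \<in> cedges cs \<longrightarrow> z = x \<or> z = y"
  proof (intro allI impI)
    fix z assume "{v,z} \<in> cedges cs"
    then obtain j where j: "j < ?n" "{v,z} = {cs ! j, cs ! nxt ?n j}" unfolding cedges_def by auto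
    from j(2) have "(v = cs ! j \<and> z = cs ! nxt ?n j) \<or> (v = cs ! nxt ?n j \<and> z = cs ! j)"
      by (auto simp: doubleton_eq_iff)
    then show "z = x \<or> z = y"
    proof
      assume a: "v = cs ! j \<and> z = cs ! nxt ?n j"
      then have "j = i" using nth_eq_iff_index_eq[OF d] i j(1) by auto
      then show ?thesis using a x_def by auto
    next
      assume a: "v = cs ! nxt ?n j \<and> z = cs ! j"
      then have "nxt ?n j = i" using nth_eq_iff_index_eq[OF d] i j(1) nxt_lt[OF j(1)] by auto
      then have "j = prv ?n i" using prv_nxt[OF j(1)] by auto
      then show ?thesis using a y_def by auto
    qed
  qed
  ultimately show ?thesis by blast
qed

lemma cyc_notin: "v \<notin> set cs \<Longrightarrow> {v,z} \<notin> cedges cs"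
  unfolding cedges_def by (auto simp: doubleton_eq_iff nxt_lt)

lemma cyc_exit:
  assumes "is_cycle V E cs" "a \<in> set cs" "a \<in> X" "b \<in> set cs" "b \<notin> X"
  shows "\<exists>i < length cs. cs ! i \<in> X \<and> cs ! nxt (length cs) i \<notin> X"
proof (rule ccontr)
  let ?n = "length cs"
  assume "\<not> ?thesis"
  then have st: "\<And>i. i < ?n \<Longrightarrow> cs ! i \<in> X \<Longrightarrow> cs ! nxt ?n i \<in> X" by auto
  obtain ia where ia: "ia < ?n" "cs ! ia = a" using assms(2) by (auto simp: in_set_conv_nth)
  obtain ib where ib: "ib < ?n" "cs ! ib = b" using assms(4) by (auto simp: in_set_conv_nth)
  have "cs ! ((ia + m) mod ?n) \<in> X" for m
  proof (induction m)
    case 0 then show ?case using ia assms(3) by simp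
  next
    case (Suc m)
    have lt: "(ia + m) mod ?n < ?n" by (rule mod_less_divisor) (use ia in auto)
    have "(ia + Suc m) mod ?n = ((ia + m) mod ?n + 1) mod ?n" by (simp add: mod_Suc_eq)
    also have "\<dots> = nxt ?n ((ia + m) mod ?n)" using mod_nxt[OF lt] .
    finally show ?case using st[OF lt Suc.IH] by simp
  qed
  from this[of "ib + ?n - ia"] have "cs ! ((ib + ?n) mod ?n) \<in> X" using ia by simp
  then show False using ib assms(5) by simp
qed

lemma cyc_cut:
  assumes "is_cycle V E cs" "a \<in> set cs" "a \<in> X" "b \<in> set cs" "b \<notin> X"
  shows "\<exists>x1 y1 x2 y2. {x1,y1} \<in> cedges cs \<and> {x2,y2} \<in> cedges cs \<and> x1 \<in> X \<and> x2 \<in> X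
     \<and> y1 \<notin> X \<and> y2 \<notin> X \<and> (x1 \<noteq> x2 \<or> y1 \<noteq> y2)"
proof -
  let ?n = "length cs"
  have n3: "3 \<le> ?n" and d: "distinct cs" using assms(1) by (auto simp: is_cycle_def)
  obtain i where i: "i < ?n" "cs ! i \<in> X" "cs ! nxt ?n i \<notin> X" using cyc_exit[OF assms] by blast
  obtain j where j: "j < ?n" "cs ! j \<in> - X" "cs ! nxt ?n j \<notin> - X"
    using cyc_exit[OF assms(1,4) _ assms(2), of "- X"] assms(3,5) by blast
  have e1: "{cs ! i, cs ! nxt ?n i} \<in> cedges cs" using i unfolding cedges_def by auto
  have e2: "{cs ! nxt ?n j, cs ! j} \<in> cedges cs" using j unfolding cedges_def by (auto simp: insert_commute)
  have "cs ! i \<noteq> cs ! nxt ?n j \<or> cs ! nxt ?n i \<noteq> cs ! j"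
  proof (rule ccontr)
    assume "\<not> ?thesis"
    then have "i = nxt ?n j" "nxt ?n i = j" using nth_eq_iff_index_eq[OF d] i(1) j(1) nxt_lt[OF i(1)] nxt_lt[OF j(1)] by auto
    then show False using nxt_nxt[OF j(1) n3] by simp
  qed
  then show ?thesis using e1 e2 i j by blast
qed

lemma cedges_inj:
  assumes "is_cycle V E cs" "i < length cs" "j < length cs"
    "{cs ! i, cs ! nxt (length cs) i} = {cs ! j, cs ! nxt (length cs) j}"
  shows "i = j"
proof -
  let ?n = "length cs"
  have n3: "3 \<le> ?n" and d: "distinct cs" using assms(1) by (auto simp: is_cycle_def)
  from assms(4) have "(cs ! i = cs ! j) \<or> (cs ! i = cs ! nxt ?n j \<and> cs ! nxt ?n i = cs ! j)"
    by (auto simp: doubleton_eq_iff)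
  then show ?thesis
  proof
    assume "cs ! i = cs ! j" then show ?thesis using nth_eq_iff_index_eq[OF d] assms(2,3) by auto
  next
    assume "cs ! i = cs ! nxt ?n j \<and> cs ! nxt ?n i = cs ! j"
    then have "i = nxt ?n j" "nxt ?n i = j" using nth_eq_iff_index_eq[OF d] assms(2,3) nxt_lt[OF assms(2)] nxt_lt[OF assms(3)] by auto
    then show ?thesis using nxt_nxt[OF assms(3) n3] by simp
  qed
qed

lemma nxt_bij: "bij_betw (nxt n) {..<n} {..<n}"
  by (rule bij_betw_byWitness[where f' = "prv n"]) (auto simp: nxt_lt prv_lt nxt_prv prv_nxt)

lemma cyc_parity:
  fixes c :: "'a \<Rightarrow> bool"
  shows "even (card {i. i < length cs \<and> c (cs ! i) \<noteq> c (cs ! nxt (length cs) i)})"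
proof -
  let ?n = "length cs"
  define g :: "nat \<Rightarrow> int" where "g i = of_bool (c (cs ! i))" for i
  have s: "(\<Sum>i<?n. g (nxt ?n i)) = (\<Sum>i<?n. g i)"
    using sum.reindex_bij_betw[OF nxt_bij, of g] by simp
  have "int (card {i. i < ?n \<and> c (cs ! i) \<noteq> c (cs ! nxt ?n i)})
      = (\<Sum>i<?n. of_bool (c (cs ! i) \<noteq> c (cs ! nxt ?n i)))"
    by (simp add: sum.If_cases lessThan_def Collect_conj_eq[symmetric] Int_def)
  also have "\<dots> = (\<Sum>i<?n. g i + g (nxt ?n i) - 2 * (g i * g (nxt ?n i)))"
    by (rule sum.cong) (auto simp: g_def)
  also have "\<dots> = 2 * ((\<Sum>i<?n. g i) - (\<Sum>i<?n. g i * g (nxt ?n i)))"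
    using s by (simp add: sum.distrib sum_subtractf sum_distrib_left algebra_simps)
  finally have "even (int (card {i. i < ?n \<and> c (cs ! i) \<noteq> c (cs ! nxt ?n i)}))" by simp
  then show ?thesis by simp
qed

lemma six_set: "{..<6::nat} = {0,1,2,3,4,5}" by auto
lemma hex_expl: "{{CV i, CV ((i + 1) mod 6)} | i. i < 6} =
  {{CV 0, CV 1}, {CV 1, CV 2}, {CV 2, CV 3}, {CV 3, CV 4}, {CV 4, CV 5}, {CV 5, CV 0}}"
proof -
  have a: "((0::nat) + 1) mod 6 = 1" "((1::nat) + 1) mod 6 = 2" "((2::nat) + 1) mod 6 = 3"
    "((3::nat) + 1) mod 6 = 4" "((4::nat) + 1) mod 6 = 5" "((5::nat) + 1) mod 6 = 0" by simp_all
  have "{{CV i, CV ((i + 1) mod 6)} | i. i < 6} = (\<lambda>i. {CV i, CV ((i + 1) mod 6)}) ` {..<6}" by auto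
  also have "\<dots> = {{CV 0, CV 1}, {CV 1, CV 2}, {CV 2, CV 3}, {CV 3, CV 4}, {CV 4, CV 5}, {CV 5, CV 0}}"
    by (simp only: six_set image_insert image_empty a)
  finally show ?thesis .
qed
lemma g3_E_expl: "g3_E k =
     {{CV 0, CV 1}, {CV 1, CV 2}, {CV 2, CV 3}, {CV 3, CV 4}, {CV 4, CV 5}, {CV 5, CV 0}}
   \<union> {{PV j, PV (j + 1)} | j. j < 2 * k}
   \<union> {{HB, PV (2 * j)} | j. j \<le> k}
   \<union> {{HB, CV 4}, {PV (2 * k), CV 1}, {CV 3, HB}, {CV 0, PV 0}}"
  unfolding g3_E_def hex_expl ..

lemma E_PV:
  assumes "{PV x, z} \<in> g3_E k"
  shows "(z = PV (x+1) \<and> x < 2*k) \<or> (z = PV (x-1) \<and> 0 < x \<and> x \<le> 2*k) \<or> (z = HB \<and> even x \<and> x \<le> 2*k)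
     \<or> (z = CV 0 \<and> x = 0) \<or> (z = CV 1 \<and> x = 2*k)"
  using assms unfolding g3_E_expl by (auto simp: doubleton_eq_iff)

lemma E_HB:
  assumes "{HB, z} \<in> g3_E k"
  shows "(\<exists>j. z = PV j \<and> even j \<and> j \<le> 2*k) \<or> z = CV 4 \<or> z = CV 3"
  using assms unfolding g3_E_expl by (auto simp: doubleton_eq_iff)

lemma E_CV0: "{CV 0, z} \<in> g3_E k \<Longrightarrow> z = CV 1 \<or> z = CV 5 \<or> z = PV 0"
  unfolding g3_E_expl by (auto simp: doubleton_eq_iff)
lemma E_CV1: "{CV 1, z} \<in> g3_E k \<Longrightarrow> z = CV 2 \<or> z = CV 0 \<or> z = PV (2*k)"
  unfolding g3_E_expl by (auto simp: doubleton_eq_iff)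
lemma E_CV2: "{CV 2, z} \<in> g3_E k \<Longrightarrow> z = CV 3 \<or> z = CV 1"
  unfolding g3_E_expl by (auto simp: doubleton_eq_iff)
lemma E_CV3: "{CV 3, z} \<in> g3_E k \<Longrightarrow> z = CV 4 \<or> z = CV 2 \<or> z = HB"
  unfolding g3_E_expl by (auto simp: doubleton_eq_iff)
lemma E_CV4: "{CV 4, z} \<in> g3_E k \<Longrightarrow> z = CV 5 \<or> z = CV 3 \<or> z = HB"
  unfolding g3_E_expl by (auto simp: doubleton_eq_iff)
lemma E_CV5: "{CV 5, z} \<in> g3_E k \<Longrightarrow> z = CV 0 \<or> z = CV 4"
  unfolding g3_E_expl by (auto simp: doubleton_eq_iff)

lemma E_hex: "i < 6 \<Longrightarrow> {CV i, CV ((i+1) mod 6)} \<in> g3_E k"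
  unfolding g3_E_def by (intro UnI1) blast
lemma E_hexs: "{CV 0, CV 1} \<in> g3_E k" "{CV 1, CV 2} \<in> g3_E k" "{CV 2, CV 3} \<in> g3_E k"
   "{CV 3, CV 4} \<in> g3_E k" "{CV 4, CV 5} \<in> g3_E k" "{CV 5, CV 0} \<in> g3_E k"
  unfolding g3_E_expl by (intro UnI1; simp)+
lemma E_path: "x < 2*k \<Longrightarrow> {PV x, PV (x+1)} \<in> g3_E k"
  unfolding g3_E_def by (rule UnI1, rule UnI1, rule UnI2) blast
lemma E_hub: "even x \<Longrightarrow> x \<le> 2*k \<Longrightarrow> {HB, PV x} \<in> g3_E k"
proof -
  assume "even x" "x \<le> 2*k"
  then obtain j where "x = 2*j" "j \<le> k" by (auto elim!: evenE)
  then show ?thesis unfolding g3_E_def by - (rule UnI1, rule UnI2, blast)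
qed

lemma V_cases: "v \<in> g3_V k \<longleftrightarrow> (\<exists>i<6. v = CV i) \<or> (\<exists>x\<le>2*k. v = PV x) \<or> v = HB"
  unfolding g3_V_def by auto

lemma V_mem: "i < 6 \<Longrightarrow> CV i \<in> g3_V k" "x \<le> 2*k \<Longrightarrow> PV x \<in> g3_V k" "HB \<in> g3_V k"
  unfolding g3_V_def by auto

lemma E_sub_V:
  assumes "e \<in> g3_E k"
  shows "\<exists>x y. x \<noteq> y \<and> x \<in> g3_V k \<and> y \<in> g3_V k \<and> e = {x, y}"
proof -
  have ne: "i < 6 \<Longrightarrow> i \<noteq> (i + 1) mod 6" for i :: nat
  proof (cases "i < 5")
    case True
    then have "(i + 1) mod 6 = i + 1" by (intro mod_less) simp
    then show ?thesis by simp
  next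
    case False
    assume "i < 6"
    with False have "i = 5" by simp
    then show ?thesis by simp
  qed
  consider i where "i<6" "e = {CV i, CV ((i+1) mod 6)}" | j where "j < 2*k" "e = {PV j, PV (j+1)}"
    | j where "j \<le> k" "e = {HB, PV (2*j)}" | "e = {HB, CV 4}" | "e = {PV (2*k), CV 1}"
    | "e = {CV 3, HB}" | "e = {CV 0, PV 0}"
    using assms unfolding g3_E_def by blast
  then show ?thesis
  proof cases
    case (1 i) then show ?thesis using ne[of i] V_mem(1)[of i k] V_mem(1)[of "(i+1) mod 6" k]
      by (intro exI[of _ "CV i"] exI[of _ "CV ((i+1) mod 6)"]) simp
  next
    case (2 j) then show ?thesis using V_mem(2)[of j k] V_mem(2)[of "j+1" k]
      by (intro exI[of _ "PV j"] exI[of _ "PV (j+1)"]) simp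
  next
    case (3 j) then show ?thesis using V_mem(2)[of "2*j" k] V_mem(3)[of k]
      by (intro exI[of _ "HB"] exI[of _ "PV (2*j)"]) simp
  next
    case 4 then show ?thesis using V_mem(3)[of k] V_mem(1)[of 4 k]
      by (intro exI[of _ "HB"] exI[of _ "CV 4"]) simp
  next
    case 5 then show ?thesis using V_mem(2)[of "2*k" k] V_mem(1)[of 1 k]
      by (intro exI[of _ "PV (2*k)"] exI[of _ "CV 1"]) simp
  next
    case 6 then show ?thesis using V_mem(1)[of 3 k] V_mem(3)[of k]
      by (intro exI[of _ "CV 3"] exI[of _ "HB"]) simp
  next
    case 7 then show ?thesis using V_mem(1)[of 0 k] V_mem(2)[of 0 k]
      by (intro exI[of _ "CV 0"] exI[of _ "PV 0"]) simp
  qed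
qed

definition col :: "g3v \<Rightarrow> bool" where
  "col v = (case v of CV i \<Rightarrow> even i | PV x \<Rightarrow> odd x | HB \<Rightarrow> True)"

lemma g3_E_cases:
  assumes "e \<in> g3_E k"
  obtains (hex) i where "i<6" "e = {CV i, CV ((i+1) mod 6)}"
   | (path) j where "j<2*k" "e = {PV j, PV (j+1)}"
   | (hub) j where "j\<le>k" "e = {HB, PV (2*j)}"
   | (x1) "e = {HB, CV 4}" | (x2) "e = {PV (2*k), CV 1}" | (x3) "e = {CV 3, HB}" | (x4) "e = {CV 0, PV 0}"
proof -
  from assms have "(((\<exists>i. e = {CV i, CV ((i+1) mod 6)} \<and> i<6) \<or> (\<exists>j. e = {PV j, PV (j+1)} \<and> j<2*k))
    \<or> (\<exists>j. e = {HB, PV (2*j)} \<and> j\<le>k)) \<or> (e = {HB, CV 4} \<or> e = {PV (2*k), CV 1} \<or> e = {CV 3, HB} \<or> e = {CV 0, PV 0})"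
    unfolding g3_E_def by (simp only: Un_iff insert_iff mem_Collect_eq empty_iff simp_thms)
  then show ?thesis by (elim disjE exE conjE) (rule that; assumption)+
qed

lemma col_eq: "{x,y} = {a,b} \<Longrightarrow> col x = col y \<Longrightarrow> col a = col b"
  by (auto simp: doubleton_eq_iff)

lemma h6: "i < 6 \<Longrightarrow> even i \<noteq> even ((i+1) mod (6::nat))"
proof (cases "i < 5")
  case True
  then have "(i + 1) mod 6 = i + 1" by (intro mod_less) simp
  then show ?thesis by simp
next
  case False
  assume "i < 6"
  with False have "i = 5" by simp
  then show ?thesis by simp
qed

lemma mono_edges:
  assumes "{x, y} \<in> g3_E k" "col x = col y"
  shows "{x, y} = {HB, CV 4} \<or> {x, y} = {PV (2*k), CV 1}"
  using assms(1)
proof (cases rule: g3_E_cases)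
  case (hex i) then show ?thesis using col_eq[OF hex(2) assms(2)] h6[of i] by (simp add: col_def)
next
  case (path j) then show ?thesis using col_eq[OF path(2) assms(2)] by (simp add: col_def)
next
  case (hub j) then show ?thesis using col_eq[OF hub(2) assms(2)] by (simp add: col_def)
next
  case x3 then show ?thesis using col_eq[OF x3 assms(2)] by (simp add: col_def)
next
  case x4 then show ?thesis using col_eq[OF x4 assms(2)] by (simp add: col_def)
qed simp_all

lemma card_idx:
  assumes "is_cycle V E cs"
  shows "card {i. i < length cs \<and> {cs ! i, cs ! nxt (length cs) i} = e} = (if e \<in> cedges cs then 1 else 0)"
proof (cases "e \<in> cedges cs")
  case True
  then obtain i where i: "i < length cs" "e = {cs ! i, cs ! nxt (length cs) i}" unfolding cedges_def by blast
  have "{i. i < length cs \<and> {cs ! i, cs ! nxt (length cs) i} = e} = {i}"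
    using i cedges_inj[OF assms] by auto
  then show ?thesis using True by simp
next
  case False
  then have "{i. i < length cs \<and> {cs ! i, cs ! nxt (length cs) i} = e} = {}"
    unfolding cedges_def by blast
  then show ?thesis using False by simp
qed

lemma par_model:
  assumes cyc: "is_cycle (g3_V k) (g3_E k) cs" and ev: "even (length cs)"
  shows "{HB, CV 4} \<in> cedges cs \<longleftrightarrow> {PV (2*k), CV 1} \<in> cedges cs"
proof -
  let ?n = "length cs"
  let ?ed = "\<lambda>i. {cs ! i, cs ! nxt ?n i}"
  define Bi where "Bi = {i. i < ?n \<and> col (cs ! i) \<noteq> col (cs ! nxt ?n i)}"
  define Mo where "Mo = {i. i < ?n \<and> col (cs ! i) = col (cs ! nxt ?n i)}"
  define A1 where "A1 = {i. i < ?n \<and> ?ed i = {HB, CV 4}}"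
  define A2 where "A2 = {i. i < ?n \<and> ?ed i = {PV (2*k), CV 1}}"
  have "even (card Bi)" unfolding Bi_def by (rule cyc_parity)
  have "Bi \<union> Mo = {..<?n}" "Bi \<inter> Mo = {}" unfolding Bi_def Mo_def by auto
  then have "card Bi + card Mo = ?n"
    by (metis card_Un_disjoint card_lessThan finite_Un finite_lessThan)
  with ev \<open>even (card Bi)\<close> have evM: "even (card Mo)" by presburger
  have "Mo = A1 \<union> A2"
  proof
    show "Mo \<subseteq> A1 \<union> A2"
    proof
      fix i assume "i \<in> Mo"
      then have i: "i < ?n" "col (cs ! i) = col (cs ! nxt ?n i)" unfolding Mo_def by auto
      have "?ed i \<in> g3_E k" using cyc_E[OF cyc] i(1) unfolding cedges_def by blast
      from mono_edges[OF this i(2)] show "i \<in> A1 \<union> A2" using i(1) unfolding A1_def A2_def by blast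
    qed
  next
    show "A1 \<union> A2 \<subseteq> Mo"
    proof
      fix i assume "i \<in> A1 \<union> A2"
      then have "i < ?n" "?ed i = {HB, CV 4} \<or> ?ed i = {PV (2*k), CV 1}" unfolding A1_def A2_def by auto
      then show "i \<in> Mo" unfolding Mo_def by (auto simp: doubleton_eq_iff col_def)
    qed
  qed
  moreover have "A1 \<inter> A2 = {}" unfolding A1_def A2_def by (auto simp: doubleton_eq_iff)
  ultimately have "card Mo = card A1 + card A2"
    by (simp add: card_Un_disjoint A1_def A2_def)
  moreover have "card A1 = (if {HB, CV 4} \<in> cedges cs then 1 else 0)" unfolding A1_def by (rule card_idx[OF cyc])
  moreover have "card A2 = (if {PV (2*k), CV 1} \<in> cedges cs then 1 else 0)" unfolding A2_def by (rule card_idx[OF cyc])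
  ultimately show ?thesis using evM by (auto split: if_splits)
qed

lemma pm_intro:
  assumes "M \<subseteq> E'" "\<And>v. v \<in> V' \<Longrightarrow> \<exists>e\<in>M. v \<in> e"
    "\<And>e1 e2. e1 \<in> M \<Longrightarrow> e2 \<in> M \<Longrightarrow> e1 \<noteq> e2 \<Longrightarrow> e1 \<inter> e2 = {}"
  shows "perfect_matching V' E' M"
  unfolding perfect_matching_def using assms by blast

lemma V_casesE:
  assumes "v \<in> g3_V k"
  obtains (c) i where "i < 6" "v = CV i" | (p) x where "x \<le> 2*k" "v = PV x" | (h) "v = HB"
  using assms unfolding V_cases by (elim disjE exE conjE) (rule that; assumption)+

definition ppairs :: "nat \<Rightarrow> nat \<Rightarrow> nat \<Rightarrow> g3v set set" where
  "ppairs lo hi k = {{PV x, PV (x+1)} | x. (even x \<and> x < lo) \<or> (odd x \<and> hi < x \<and> x < 2*k)}"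

lemma ppairs_disj:
  assumes "lo \<le> hi" "e1 \<in> ppairs lo hi k" "e2 \<in> ppairs lo hi k" "e1 \<noteq> e2"
  shows "e1 \<inter> e2 = {}"
proof -
  obtain x where x: "e1 = {PV x, PV (x+1)}" "(even x \<and> x < lo) \<or> (odd x \<and> hi < x \<and> x < 2*k)"
    using assms(2) unfolding ppairs_def by blast
  obtain y where y: "e2 = {PV y, PV (y+1)}" "(even y \<and> y < lo) \<or> (odd y \<and> hi < y \<and> y < 2*k)"
    using assms(3) unfolding ppairs_def by blast
  have "x \<noteq> y" using x y assms(4) by auto
  have "x \<noteq> y + 1" "y \<noteq> x + 1" using x(2) y(2) assms(1) by presburger+
  then show ?thesis using x(1) y(1) \<open>x \<noteq> y\<close> by auto
qed

lemma ppairs_E: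
  assumes "hi \<le> 2*k" "lo \<le> hi" "e \<in> ppairs lo hi k"
  shows "e \<in> g3_E k"
proof -
  obtain x where x: "e = {PV x, PV (x+1)}" "(even x \<and> x < lo) \<or> (odd x \<and> hi < x \<and> x < 2*k)"
    using assms(3) unfolding ppairs_def by blast
  then have "x < 2*k" using assms by auto
  then show ?thesis using x(1) E_path by simp
qed

lemma ppairs_cover:
  assumes "lo \<le> hi" "even lo" "even hi" "hi \<le> 2*k" "x \<le> 2*k" "x < lo \<or> hi < x"
  shows "\<exists>e\<in>ppairs lo hi k. PV x \<in> e"
proof (cases "(even x \<and> x < lo) \<or> (odd x \<and> hi < x \<and> x < 2*k)")
  case True
  then show ?thesis unfolding ppairs_def by blast
next
  case False
  then have c: "(even (x-1) \<and> x-1 < lo) \<or> (odd (x-1) \<and> hi < x-1 \<and> x-1 < 2*k)" "x \<noteq> 0"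
    using assms by presburger+
  then have "{PV (x-1), PV (x-1+1)} \<in> ppairs lo hi k" unfolding ppairs_def by blast
  then show ?thesis using c(2) by auto
qed

lemma ppairs_PV0: "e \<in> ppairs lo hi k \<Longrightarrow> v \<in> e \<Longrightarrow> \<exists>x. v = PV x"
  unfolding ppairs_def by auto

lemma ppairs_PV:
  assumes "even lo" "e \<in> ppairs lo hi k" "v \<in> e"
  shows "\<exists>x. v = PV x \<and> (x < lo \<or> hi < x)"
proof -
  obtain x where x: "e = {PV x, PV (x+1)}" "(even x \<and> x < lo) \<or> (odd x \<and> hi < x \<and> x < 2*k)"
    using assms(2) unfolding ppairs_def by blast
  have "x + 1 < lo \<or> hi < x + 1" using x(2) assms(1) by presburger
  then show ?thesis using x assms(3) by auto
qed

definition Hs :: "g3v set set set" where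
  "Hs = {{}, {{CV 0, CV 1}, {CV 2, CV 3}, {CV 4, CV 5}}, {{CV 1, CV 2}}, {{CV 4, CV 5}}, {{CV 5, CV 0}}, {{CV 2, CV 3}}}"

lemma Hs_E: "H \<in> Hs \<Longrightarrow> H \<subseteq> g3_E k"
  unfolding Hs_def using E_hexs by auto

lemma Hs_disj: "H \<in> Hs \<Longrightarrow> e1 \<in> H \<Longrightarrow> e2 \<in> H \<Longrightarrow> e1 \<noteq> e2 \<Longrightarrow> e1 \<inter> e2 = {}"
  unfolding Hs_def by auto

lemma Hs_CV: "H \<in> Hs \<Longrightarrow> e \<in> H \<Longrightarrow> v \<in> e \<Longrightarrow> \<exists>i<6. v = CV i"
  unfolding Hs_def by auto

lemma disjHP:
  assumes "H \<in> Hs" "e1 \<in> H" "e2 \<in> ppairs lo hi k"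
  shows "e1 \<inter> e2 = {}"
proof (rule ccontr)
  assume "e1 \<inter> e2 \<noteq> {}"
  then obtain v where v: "v \<in> e1" "v \<in> e2" by blast
  obtain i where "v = CV i" using Hs_CV[OF assms(1,2) v(1)] by blast
  moreover obtain x where "v = PV x" using ppairs_PV0[OF assms(3) v(2)] by blast
  ultimately show False by simp
qed

lemma pm_build:
  assumes "lo \<le> hi" "even lo" "even hi" "hi \<le> 2*k"
    and PS: "\<And>x. PV x \<in> S \<longleftrightarrow> lo \<le> x \<and> x \<le> hi" and "HB \<in> S" and H: "H \<in> Hs"
    and CS: "\<And>i. i < 6 \<Longrightarrow> CV i \<in> S \<longleftrightarrow> CV i \<notin> \<Union>H"
  shows "has_perfect_matching (g3_V k - S) (del_verts_E (g3_E k) S)"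
  unfolding has_perfect_matching_def
proof (intro exI pm_intro)
  let ?M = "ppairs lo hi k \<union> H"
  show "?M \<subseteq> del_verts_E (g3_E k) S"
  proof
    fix e assume e: "e \<in> ?M"
    have "e \<in> g3_E k"
    proof (cases "e \<in> H")
      case True then show ?thesis using Hs_E[OF H] by blast
    next
      case False then show ?thesis using e ppairs_E[OF assms(4,1)] by blast
    qed
    moreover have "e \<inter> S = {}"
    proof (rule ccontr)
      assume "e \<inter> S \<noteq> {}"
      then obtain v where v: "v \<in> e" "v \<in> S" by blast
      show False
      proof (cases "e \<in> H")
        case True
        then obtain i where "i < 6" "v = CV i" using Hs_CV[OF H True v(1)] by blast
        then have "CV i \<in> \<Union>H" using v(1) True by blast
        then show False using CS[OF \<open>i < 6\<close>] v(2) \<open>v = CV i\<close> by blast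
      next
        case False
        then have "e \<in> ppairs lo hi k" using e by blast
        then obtain x where "v = PV x" "x < lo \<or> hi < x" using ppairs_PV[OF assms(2)] v(1) by blast
        then show False using PS v(2) by auto
      qed
    qed
    ultimately show "e \<in> del_verts_E (g3_E k) S" unfolding del_verts_E_def by blast
  qed
next
  let ?M = "ppairs lo hi k \<union> H"
  fix v assume v: "v \<in> g3_V k - S"
  have "v \<in> g3_V k" using v by blast
  then show "\<exists>e\<in>?M. v \<in> e"
  proof (cases rule: V_casesE)
    case (c i) then have "CV i \<in> \<Union>H" using CS v by blast
    then obtain e where "e \<in> H" "CV i \<in> e" by blast
    then show ?thesis using c(2) by (intro bexI[of _ e]) simp_all
  next
    case (p x)
    have "PV x \<notin> S" using v p(2) by blast
    then have "x < lo \<or> hi < x" using PS[of x] by (auto simp: not_le)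
    then show ?thesis using ppairs_cover[OF assms(1-4) p(1)] p(2) by blast
  next
    case h then show ?thesis using v \<open>HB \<in> S\<close> by blast
  qed
next
  let ?M = "ppairs lo hi k \<union> H"
  fix e1 e2 assume e: "e1 \<in> ?M" "e2 \<in> ?M" "e1 \<noteq> e2"
  show "e1 \<inter> e2 = {}"
  proof (cases "e1 \<in> H")
    case True
    show ?thesis
    proof (cases "e2 \<in> H")
      case True then show ?thesis using Hs_disj[OF H] \<open>e1 \<in> H\<close> e(3) by blast
    next
      case False
      then have "e2 \<in> ppairs lo hi k" using e by blast
      then show ?thesis using disjHP[OF H \<open>e1 \<in> H\<close>] by blast
    qed
  next
    case False
    then have p1: "e1 \<in> ppairs lo hi k" using e by blast
    show ?thesis
    proof (cases "e2 \<in> H")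
      case True then show ?thesis using disjHP[OF H True p1] by blast
    next
      case False
      then have "e2 \<in> ppairs lo hi k" using e by blast
      then show ?thesis using ppairs_disj[OF assms(1) p1 _ e(3)] by blast
    qed
  qed
qed

lemma pm_build0:
  assumes S: "S = {CV i | i. i < 6}"
  shows "has_perfect_matching (g3_V k - S) (del_verts_E (g3_E k) S)"
  unfolding has_perfect_matching_def
proof (intro exI pm_intro)
  let ?M = "insert {HB, PV 0} {{PV x, PV (x+1)} | x. odd x \<and> x < 2*k}"
  show "?M \<subseteq> del_verts_E (g3_E k) S"
    unfolding del_verts_E_def S using E_path E_hub[of 0 k] by auto
next
  let ?M = "insert {HB, PV 0} {{PV x, PV (x+1)} | x. odd x \<and> x < 2*k}"
  fix v assume v: "v \<in> g3_V k - S"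
  have "v \<in> g3_V k" using v by blast
  then show "\<exists>e\<in>?M. v \<in> e"
  proof (cases rule: V_casesE)
    case (c i) then show ?thesis using v S by blast
  next
    case (p x)
    show ?thesis
    proof (cases "x = 0")
      case True then show ?thesis using p by auto
    next
      case False
      show ?thesis
      proof (cases "odd x")
        case True
        then have "x < 2*k" using p(1) by presburger
        then show ?thesis using p True by blast
      next
        case ev: False
        then have "{PV (x-1), PV (x-1+1)} \<in> ?M" using False p(1) by auto
        then show ?thesis using False p(2) by auto
      qed
    qed
  qed simp
next
  let ?M = "insert {HB, PV 0} {{PV x, PV (x+1)} | x. odd x \<and> x < 2*k}"
  fix e1 e2 assume e: "e1 \<in> ?M" "e2 \<in> ?M" "e1 \<noteq> e2"
  have oo: "odd x \<Longrightarrow> odd y \<Longrightarrow> x \<noteq> y + 1" for x y :: nat by presburger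
  show "e1 \<inter> e2 = {}"
    using e oo by (auto simp: doubleton_eq_iff)
qed

lemma PV_V: "PV j \<in> g3_V k \<Longrightarrow> j \<le> 2*k"
  unfolding g3_V_def by auto

lemma six_cases: "i < 6 \<Longrightarrow> i = 0 \<or> i = 1 \<or> i = 2 \<or> i = 3 \<or> i = 4 \<or> i = (5::nat)"
  by arith

locale cdata =
  fixes k :: nat and S :: "g3v set" and CE :: "g3v set set"
  assumes CEsub: "CE \<subseteq> g3_E k"
    and SV: "S \<subseteq> g3_V k"
    and nb: "\<And>v. v \<in> S \<Longrightarrow> \<exists>x y. x \<noteq> y \<and> {v,x} \<in> CE \<and> {v,y} \<in> CE \<and> (\<forall>z. {v,z} \<in> CE \<longrightarrow> z = x \<or> z = y)"
    and nS: "\<And>v z. v \<notin> S \<Longrightarrow> {v,z} \<notin> CE"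
    and cut: "\<And>X a b. a \<in> S \<Longrightarrow> a \<in> X \<Longrightarrow> b \<in> S \<Longrightarrow> b \<notin> X \<Longrightarrow>
       \<exists>x1 y1 x2 y2. {x1,y1} \<in> CE \<and> {x2,y2} \<in> CE \<and> x1 \<in> X \<and> x2 \<in> X \<and> y1 \<notin> X \<and> y2 \<notin> X \<and> (x1 \<noteq> x2 \<or> y1 \<noteq> y2)"
    and par: "{HB, CV 4} \<in> CE \<longleftrightarrow> {PV (2*k), CV 1} \<in> CE"
    and ne: "S \<noteq> {}"
begin

lemma sym: "{a,b} \<in> CE \<Longrightarrow> {b,a} \<in> CE" by (simp add: insert_commute)
lemma inS: "{a,b} \<in> CE \<Longrightarrow> a \<in> S" using nS by blast
lemma inS2: "{a,b} \<in> CE \<Longrightarrow> b \<in> S" using inS sym by blast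
lemma inE: "{a,b} \<in> CE \<Longrightarrow> {a,b} \<in> g3_E k" using CEsub by blast

lemma deg3:
  assumes "{v,a} \<in> CE" "{v,b} \<in> CE" "{v,c} \<in> CE" "a \<noteq> b" "a \<noteq> c" "b \<noteq> c"
  shows False
proof -
  obtain x y where "\<forall>z. {v,z} \<in> CE \<longrightarrow> z = x \<or> z = y" using nb[OF inS[OF assms(1)]] by blast
  then have "a = x \<or> a = y" "b = x \<or> b = y" "c = x \<or> c = y" using assms(1-3) by blast+
  then show False using assms(4-6) by blast
qed

lemma exact: "{v,a} \<in> CE \<Longrightarrow> {v,b} \<in> CE \<Longrightarrow> a \<noteq> b \<Longrightarrow> {v,z} \<in> CE \<Longrightarrow> z = a \<or> z = b"
  using deg3 by blast

lemma two2:
  assumes "v \<in> S" "\<And>z. {v,z} \<in> CE \<Longrightarrow> z = a \<or> z = b"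
  shows "{v,a} \<in> CE \<and> {v,b} \<in> CE"
proof -
  obtain x y where xy: "x \<noteq> y" "{v,x} \<in> CE" "{v,y} \<in> CE" using nb[OF assms(1)] by blast
  have "x = a \<or> x = b" "y = a \<or> y = b" using assms(2) xy(2,3) by blast+
  then show ?thesis using xy by blast
qed

lemma one1:
  assumes "v \<in> S" "\<And>z. {v,z} \<in> CE \<Longrightarrow> z = a"
  shows False
proof -
  obtain x y where xy: "x \<noteq> y" "{v,x} \<in> CE" "{v,y} \<in> CE" using nb[OF assms(1)] by blast
  then show False using assms(2) by blast
qed

lemma nbPV:
  assumes "{PV x, z} \<in> CE"
  shows "(z = PV (x+1) \<and> x < 2*k) \<or> (z = PV (x-1) \<and> 0 < x \<and> x \<le> 2*k) \<or> (z = HB \<and> even x)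
     \<or> (z = CV 0 \<and> x = 0) \<or> (z = CV 1 \<and> x = 2*k)"
  using E_PV[OF inE[OF assms]] by blast

lemma PV_le: "PV x \<in> S \<Longrightarrow> x \<le> 2*k"
  using SV PV_V by blast

lemma odd_PV:
  assumes "PV j \<in> S" "odd j"
  shows "{PV j, PV (j-1)} \<in> CE \<and> {PV j, PV (j+1)} \<in> CE"
proof -
  have "j \<le> 2*k" using PV_le assms(1) by blast
  have "z = PV (j-1) \<or> z = PV (j+1)" if "{PV j, z} \<in> CE" for z
    using nbPV[OF that] assms(2) \<open>j \<le> 2*k\<close> by auto
  then show ?thesis using two2[OF assms(1)] by blast
qed

lemma convex:
  assumes "a < g" "g < b" "PV a \<in> S" "PV b \<in> S"
  shows "PV g \<in> S"
proof (rule ccontr)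
  assume g: "PV g \<notin> S"
  have b2k: "b \<le> 2*k" using PV_le assms(4) by blast
  define L where "L = {v. \<exists>x. v = PV x \<and> x < g}"
  define R where "R = {v. \<exists>x. v = PV x \<and> g < x}"
  have Lc: "(w = HB \<and> (\<exists>x<g. u = PV x)) \<or> (w = CV 0 \<and> u = PV 0)"
    if A: "{u,w} \<in> CE" "u \<in> L" "w \<notin> L" for u w
  proof -
    obtain x where x: "u = PV x" "x < g" using A(2) unfolding L_def by blast
    have "w \<noteq> PV (x+1)"
    proof
      assume "w = PV (x+1)"
      then have "x + 1 = g" using A(3) x unfolding L_def by auto
      then show False using inS2[OF A(1)] g \<open>w = PV (x+1)\<close> by simp
    qed
    moreover have "w \<noteq> PV (x-1)" using A(3) x unfolding L_def by auto
    moreover have "x \<noteq> 2*k" using x(2) assms(2) b2k by simp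
    ultimately show ?thesis using nbPV[of x w] A(1) x by auto
  qed
  have Rc: "(w = HB \<and> (\<exists>x>g. u = PV x)) \<or> (w = CV 1 \<and> u = PV (2*k))"
    if A: "{u,w} \<in> CE" "u \<in> R" "w \<notin> R" for u w
  proof -
    obtain x where x: "u = PV x" "g < x" using A(2) unfolding R_def by blast
    have "w \<noteq> PV (x-1)"
    proof
      assume "w = PV (x-1)"
      then have "x - 1 = g" using A(3) x unfolding R_def by auto
      then show False using inS2[OF A(1)] g \<open>w = PV (x-1)\<close> by simp
    qed
    moreover have "w \<noteq> PV (x+1)" using A(3) x unfolding R_def by auto
    moreover have "x \<noteq> 0" using x(2) by simp
    ultimately show ?thesis using nbPV[of x w] A(1) x by auto
  qed
  have aL: "PV a \<in> L" and bL: "PV b \<notin> L" and aR: "PV a \<notin> R" and bR: "PV b \<in> R"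
    unfolding L_def R_def using assms(1,2) by auto
  obtain u1 w1 u2 w2 where cL: "{u1,w1} \<in> CE" "{u2,w2} \<in> CE" "u1 \<in> L" "u2 \<in> L" "w1 \<notin> L" "w2 \<notin> L"
    "u1 \<noteq> u2 \<or> w1 \<noteq> w2"
    using cut[OF assms(3) aL assms(4) bL] by blast
  obtain u3 w3 u4 w4 where cR: "{u3,w3} \<in> CE" "{u4,w4} \<in> CE" "u3 \<in> R" "u4 \<in> R" "w3 \<notin> R" "w4 \<notin> R"
    "u3 \<noteq> u4 \<or> w3 \<noteq> w4"
    using cut[OF assms(4) bR assms(3) aR] by blast
  note l1 = Lc[OF cL(1,3,5)] and l2 = Lc[OF cL(2,4,6)]
  note r1 = Rc[OF cR(1,3,5)] and r2 = Rc[OF cR(2,4,6)]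
  have hL: "\<exists>x<g. {HB, PV x} \<in> CE" using l1 l2 cL(1,2,7) sym by blast
  have hR: "\<exists>x>g. {HB, PV x} \<in> CE" using r1 r2 cR(1,2,7) sym by blast
  then obtain xR where xR: "g < xR" "{HB, PV xR} \<in> CE" by blast
  obtain xL where xL: "xL < g" "{HB, PV xL} \<in> CE" using hL by blast
  have p0: "{PV 0, CV 0} \<in> CE"
  proof (rule ccontr)
    assume "{PV 0, CV 0} \<notin> CE"
    then have "w1 = HB" "w2 = HB" using l1 l2 cL(1,2) by auto
    then obtain x1 x2 where "x1 < g" "x2 < g" "u1 = PV x1" "u2 = PV x2" "x1 \<noteq> x2"
      using l1 l2 cL(7) by auto
    then show False using deg3[of HB "PV x1" "PV x2" "PV xR"] cL(1,2) \<open>w1 = HB\<close> \<open>w2 = HB\<close> xR sym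
      by force
  qed
  have p1: "{PV (2*k), CV 1} \<in> CE"
  proof (rule ccontr)
    assume "{PV (2*k), CV 1} \<notin> CE"
    then have "w3 = HB" "w4 = HB" using r1 r2 cR(1,2) by auto
    then obtain x1 x2 where "g < x1" "g < x2" "u3 = PV x1" "u4 = PV x2" "x1 \<noteq> x2"
      using r1 r2 cR(7) by auto
    then show False using deg3[of HB "PV x1" "PV x2" "PV xL"] cR(1,2) \<open>w3 = HB\<close> \<open>w4 = HB\<close> xL sym
      by force
  qed
  have "{HB, CV 4} \<in> CE" using par p1 by blast
  then show False using deg3[of HB "PV xL" "PV xR" "CV 4"] xL xR by force
qed

lemma gen2:
  assumes "\<And>z. {v,z} \<in> CE \<Longrightarrow> z = a \<or> z = b"
  shows "(v \<in> S \<and> {v,a} \<in> CE \<and> {v,b} \<in> CE) \<or> (v \<notin> S \<and> {v,a} \<notin> CE \<and> {v,b} \<notin> CE)"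
  using two2[of v a b] assms nS by blast

lemma gen3:
  assumes "\<And>z. {v,z} \<in> CE \<Longrightarrow> z = a \<or> z = b \<or> z = c" "a \<noteq> b" "a \<noteq> c" "b \<noteq> c"
  shows "(v \<in> S \<and> (({v,a} \<in> CE \<and> {v,b} \<in> CE \<and> {v,c} \<notin> CE) \<or> ({v,a} \<in> CE \<and> {v,b} \<notin> CE \<and> {v,c} \<in> CE)
      \<or> ({v,a} \<notin> CE \<and> {v,b} \<in> CE \<and> {v,c} \<in> CE)))
    \<or> (v \<notin> S \<and> {v,a} \<notin> CE \<and> {v,b} \<notin> CE \<and> {v,c} \<notin> CE)"
proof (cases "v \<in> S")
  case True
  obtain x y where xy: "x \<noteq> y" "{v,x} \<in> CE" "{v,y} \<in> CE" using nb[OF True] by blast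
  have "\<not> ({v,a} \<in> CE \<and> {v,b} \<in> CE \<and> {v,c} \<in> CE)" using deg3[of v a b c] assms(2-4) by blast
  moreover have "x = a \<or> x = b \<or> x = c" "y = a \<or> y = b \<or> y = c" using assms(1) xy by blast+
  ultimately show ?thesis using True xy by blast
next
  case False then show ?thesis using nS by blast
qed

lemma ori: "{CV 1, CV 0} = {CV 0, CV 1}" "{CV 2, CV 1} = {CV 1, CV 2}" "{CV 3, CV 2} = {CV 2, CV 3}"
  "{CV 4, CV 3} = {CV 3, CV 4}" "{CV 5, CV 4} = {CV 4, CV 5}" "{CV 0, CV 5} = {CV 5, CV 0}"
  "{CV 3, HB} = {HB, CV 3}" "{CV 4, HB} = {HB, CV 4}" "{CV 1, PV (2*k)} = {PV (2*k), CV 1}"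
  by (rule insert_commute)+

lemma hexF0:
  "(CV 0 \<in> S \<and> (({CV 0, CV 1} \<in> CE \<and> {CV 5, CV 0} \<in> CE \<and> {CV 0, PV 0} \<notin> CE) \<or> ({CV 0, CV 1} \<in> CE \<and> {CV 5, CV 0} \<notin> CE \<and> {CV 0, PV 0} \<in> CE)
      \<or> ({CV 0, CV 1} \<notin> CE \<and> {CV 5, CV 0} \<in> CE \<and> {CV 0, PV 0} \<in> CE)))
    \<or> (CV 0 \<notin> S \<and> {CV 0, CV 1} \<notin> CE \<and> {CV 5, CV 0} \<notin> CE \<and> {CV 0, PV 0} \<notin> CE)"
proof -
  have nbr: "\<And>z. {CV 0, z} \<in> CE \<Longrightarrow> z = CV 1 \<or> z = CV 5 \<or> z = PV 0" using E_CV0 inE by blast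
  have d: "CV 1 \<noteq> CV 5" "CV 1 \<noteq> PV 0" "CV 5 \<noteq> PV 0" by simp_all
  show ?thesis by (rule gen3[of "CV 0" "CV 1" "CV 5" "PV 0", OF nbr d, unfolded ori])
qed

lemma hexF1:
  "(CV 1 \<in> S \<and> (({CV 1, CV 2} \<in> CE \<and> {CV 0, CV 1} \<in> CE \<and> {PV (2*k), CV 1} \<notin> CE) \<or> ({CV 1, CV 2} \<in> CE \<and> {CV 0, CV 1} \<notin> CE \<and> {PV (2*k), CV 1} \<in> CE)
      \<or> ({CV 1, CV 2} \<notin> CE \<and> {CV 0, CV 1} \<in> CE \<and> {PV (2*k), CV 1} \<in> CE)))
    \<or> (CV 1 \<notin> S \<and> {CV 1, CV 2} \<notin> CE \<and> {CV 0, CV 1} \<notin> CE \<and> {PV (2*k), CV 1} \<notin> CE)"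
proof -
  have nbr: "\<And>z. {CV 1, z} \<in> CE \<Longrightarrow> z = CV 2 \<or> z = CV 0 \<or> z = PV (2*k)" using E_CV1 inE by blast
  have d: "CV 2 \<noteq> CV 0" "CV 2 \<noteq> PV (2*k)" "CV 0 \<noteq> PV (2*k)" by simp_all
  show ?thesis by (rule gen3[of "CV 1" "CV 2" "CV 0" "PV (2*k)", OF nbr d, unfolded ori])
qed

lemma hexF2:
  "(CV 2 \<in> S \<and> {CV 2, CV 3} \<in> CE \<and> {CV 1, CV 2} \<in> CE) \<or> (CV 2 \<notin> S \<and> {CV 2, CV 3} \<notin> CE \<and> {CV 1, CV 2} \<notin> CE)"
proof -
  have nbr: "\<And>z. {CV 2, z} \<in> CE \<Longrightarrow> z = CV 3 \<or> z = CV 1" using E_CV2 inE by blast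
  show ?thesis by (rule gen2[of "CV 2" "CV 3" "CV 1", OF nbr, unfolded ori])
qed

lemma hexF3:
  "(CV 3 \<in> S \<and> (({CV 3, CV 4} \<in> CE \<and> {CV 2, CV 3} \<in> CE \<and> {HB, CV 3} \<notin> CE) \<or> ({CV 3, CV 4} \<in> CE \<and> {CV 2, CV 3} \<notin> CE \<and> {HB, CV 3} \<in> CE)
      \<or> ({CV 3, CV 4} \<notin> CE \<and> {CV 2, CV 3} \<in> CE \<and> {HB, CV 3} \<in> CE)))
    \<or> (CV 3 \<notin> S \<and> {CV 3, CV 4} \<notin> CE \<and> {CV 2, CV 3} \<notin> CE \<and> {HB, CV 3} \<notin> CE)"
proof -
  have nbr: "\<And>z. {CV 3, z} \<in> CE \<Longrightarrow> z = CV 4 \<or> z = CV 2 \<or> z = HB" using E_CV3 inE by blast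
  have d: "CV 4 \<noteq> CV 2" "CV 4 \<noteq> HB" "CV 2 \<noteq> HB" by simp_all
  show ?thesis by (rule gen3[of "CV 3" "CV 4" "CV 2" "HB", OF nbr d, unfolded ori])
qed

lemma hexF4:
  "(CV 4 \<in> S \<and> (({CV 4, CV 5} \<in> CE \<and> {CV 3, CV 4} \<in> CE \<and> {HB, CV 4} \<notin> CE) \<or> ({CV 4, CV 5} \<in> CE \<and> {CV 3, CV 4} \<notin> CE \<and> {HB, CV 4} \<in> CE)
      \<or> ({CV 4, CV 5} \<notin> CE \<and> {CV 3, CV 4} \<in> CE \<and> {HB, CV 4} \<in> CE)))
    \<or> (CV 4 \<notin> S \<and> {CV 4, CV 5} \<notin> CE \<and> {CV 3, CV 4} \<notin> CE \<and> {HB, CV 4} \<notin> CE)"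
proof -
  have nbr: "\<And>z. {CV 4, z} \<in> CE \<Longrightarrow> z = CV 5 \<or> z = CV 3 \<or> z = HB" using E_CV4 inE by blast
  have d: "CV 5 \<noteq> CV 3" "CV 5 \<noteq> HB" "CV 3 \<noteq> HB" by simp_all
  show ?thesis by (rule gen3[of "CV 4" "CV 5" "CV 3" "HB", OF nbr d, unfolded ori])
qed

lemma hexF5:
  "(CV 5 \<in> S \<and> {CV 5, CV 0} \<in> CE \<and> {CV 4, CV 5} \<in> CE) \<or> (CV 5 \<notin> S \<and> {CV 5, CV 0} \<notin> CE \<and> {CV 4, CV 5} \<notin> CE)"
proof -
  have nbr: "\<And>z. {CV 5, z} \<in> CE \<Longrightarrow> z = CV 0 \<or> z = CV 4" using E_CV5 inE by blast
  show ?thesis by (rule gen2[of "CV 5" "CV 0" "CV 4", OF nbr, unfolded ori])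
qed

lemma hex_conc:
  assumes "H \<in> Hs" "CV 0 \<in> S \<longleftrightarrow> CV 0 \<notin> \<Union>H" "CV 1 \<in> S \<longleftrightarrow> CV 1 \<notin> \<Union>H"
    "CV 2 \<in> S \<longleftrightarrow> CV 2 \<notin> \<Union>H" "CV 3 \<in> S \<longleftrightarrow> CV 3 \<notin> \<Union>H"
    "CV 4 \<in> S \<longleftrightarrow> CV 4 \<notin> \<Union>H" "CV 5 \<in> S \<longleftrightarrow> CV 5 \<notin> \<Union>H"
  shows "\<exists>H\<in>Hs. \<forall>i<6. CV i \<in> S \<longleftrightarrow> CV i \<notin> \<Union>H"
proof (intro bexI[OF _ assms(1)] allI impI)
  fix i :: nat assume "i < 6"
  then show "CV i \<in> S \<longleftrightarrow> CV i \<notin> \<Union>H" using six_cases[of i] assms(2-7) by auto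
qed

lemma nbHB: "{HB, z} \<in> CE \<Longrightarrow> (\<exists>j. z = PV j) \<or> z = CV 4 \<or> z = CV 3"
  using E_HB inE by blast

end

locale cint = cdata +
  fixes lo hi :: nat
  assumes lo_in: "PV lo \<in> S" and lo_min: "\<And>x. PV x \<in> S \<Longrightarrow> lo \<le> x"
    and hi_in: "PV hi \<in> S" and hi_max: "\<And>x. PV x \<in> S \<Longrightarrow> x \<le> hi"
begin

lemma lohi: "lo \<le> hi" "hi \<le> 2*k"
  using lo_min[OF hi_in] PV_le[OF hi_in] by auto

lemma PS: "PV x \<in> S \<longleftrightarrow> lo \<le> x \<and> x \<le> hi"
proof
  assume "PV x \<in> S" then show "lo \<le> x \<and> x \<le> hi" using lo_min hi_max by blast
next
  assume a: "lo \<le> x \<and> x \<le> hi"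
  show "PV x \<in> S"
  proof (cases "x = lo \<or> x = hi")
    case True then show ?thesis using lo_in hi_in by blast
  next
    case False then have "lo < x" "x < hi" using a by auto
    then show ?thesis using convex lo_in hi_in by blast
  qed
qed

lemma ev_lo: "even lo"
proof (rule ccontr)
  assume "odd lo"
  then have "{PV lo, PV (lo-1)} \<in> CE" using odd_PV lo_in by blast
  then have "PV (lo-1) \<in> S" by (rule inS2)
  then have "lo \<le> lo - 1" using lo_min by blast
  with \<open>odd lo\<close> show False by presburger
qed

lemma ev_hi: "even hi"
proof (rule ccontr)
  assume "odd hi"
  then have "{PV hi, PV (hi+1)} \<in> CE" using odd_PV hi_in by blast
  then have "PV (hi+1) \<in> S" by (rule inS2)
  then have "hi + 1 \<le> hi" using hi_max by blast
  then show False by simp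
qed

lemma interior:
  assumes "lo < x" "x < hi"
  shows "{PV x, PV (x-1)} \<in> CE \<and> {PV x, PV (x+1)} \<in> CE"
proof (cases "odd x")
  case True
  then show ?thesis using odd_PV PS assms by simp
next
  case False
  have o1: "odd (x-1)" "odd (x+1)" using False assms by presburger+
  have "x + 1 \<le> hi" using assms ev_hi False by presburger
  moreover have "lo \<le> x - 1" "x - 1 \<le> hi" using assms by linarith+
  ultimately have s1: "PV (x-1) \<in> S" "PV (x+1) \<in> S" using PS assms by simp_all
  have "{PV (x-1), PV (x-1+1)} \<in> CE" using odd_PV[OF s1(1) o1(1)] by blast
  moreover have "{PV (x+1), PV (x+1-1)} \<in> CE" using odd_PV[OF s1(2) o1(2)] by blast
  moreover have "x - 1 + 1 = x" using assms by simp
  ultimately show ?thesis using sym by auto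
qed

lemma int_noHB: "lo < x \<Longrightarrow> x < hi \<Longrightarrow> {PV x, HB} \<notin> CE"
  using interior[of x] deg3[of "PV x" "PV (x-1)" "PV (x+1)" HB] by force

lemma HBnb: "{HB, PV x} \<in> CE \<Longrightarrow> x = lo \<or> x = hi"
proof -
  assume a: "{HB, PV x} \<in> CE"
  then have "PV x \<in> S" by (rule inS2)
  then have "lo \<le> x" "x \<le> hi" using PS by auto
  moreover have "{PV x, HB} \<in> CE" using a sym by blast
  ultimately show ?thesis using int_noHB[of x] by force
qed

lemma lo_next: "lo < hi \<Longrightarrow> {PV lo, PV (lo+1)} \<in> CE"
proof -
  assume "lo < hi"
  moreover have "lo + 1 \<le> hi" using \<open>lo < hi\<close> ev_lo ev_hi by presburger
  ultimately have "PV (lo+1) \<in> S" "odd (lo+1)" using PS ev_lo by simp_all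
  then have "{PV (lo+1), PV (lo+1-1)} \<in> CE" using odd_PV by blast
  then show ?thesis using sym by simp
qed

lemma hi_prev: "lo < hi \<Longrightarrow> {PV hi, PV (hi-1)} \<in> CE"
proof -
  assume a: "lo < hi"
  moreover have "lo \<le> hi - 1" using \<open>lo < hi\<close> by simp
  moreover have "odd (hi-1)" using a ev_hi by presburger
  ultimately have "PV (hi-1) \<in> S" "odd (hi-1)" using PS by simp_all
  then have "{PV (hi-1), PV (hi-1+1)} \<in> CE" using odd_PV by blast
  moreover have "hi - 1 + 1 = hi" using a by simp
  ultimately show ?thesis using sym by simp
qed

lemma lo_exit: "{PV lo, HB} \<in> CE \<or> (lo = 0 \<and> {CV 0, PV 0} \<in> CE)"
proof (rule ccontr)
  assume na: "\<not> ?thesis"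
  have nb': "z = PV (lo+1) \<and> lo < 2*k \<or> z = CV 1 \<and> lo = 2*k" if "{PV lo, z} \<in> CE" for z
  proof -
    have "z \<noteq> PV (lo - 1) \<or> lo = 0"
    proof (rule ccontr)
      assume "\<not> (z \<noteq> PV (lo - 1) \<or> lo = 0)"
      then have "z = PV (lo-1)" "lo \<noteq> 0" by auto
      then have "PV (lo-1) \<in> S" using inS2[OF that] by simp
      then show False using lo_min \<open>lo \<noteq> 0\<close> by fastforce
    qed
    moreover have "\<not> (z = CV 0 \<and> lo = 0)"
    proof
      assume "z = CV 0 \<and> lo = 0"
      then have "{CV 0, PV 0} \<in> CE" using that sym by auto
      then show False using na \<open>z = CV 0 \<and> lo = 0\<close> by blast
    qed
    ultimately show ?thesis using nbPV[OF that] na that by auto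
  qed
  show False
  proof (cases "lo = 2*k")
    case True then show False using one1[OF lo_in, of "CV 1"] nb' by auto
  next
    case False then show False using one1[OF lo_in, of "PV (lo+1)"] nb' by auto
  qed
qed

lemma hi_exit: "{PV hi, HB} \<in> CE \<or> (hi = 2*k \<and> {PV (2*k), CV 1} \<in> CE)"
proof (rule ccontr)
  assume na: "\<not> ?thesis"
  have nb': "z = PV (hi-1) \<and> 0 < hi \<or> z = CV 0 \<and> hi = 0" if "{PV hi, z} \<in> CE" for z
  proof -
    have "z \<noteq> PV (hi + 1)"
    proof
      assume "z = PV (hi+1)"
      then have "PV (hi+1) \<in> S" using inS2[OF that] by simp
      then show False using hi_max by fastforce
    qed
    moreover have "\<not> (z = CV 1 \<and> hi = 2*k)"
    proof
      assume "z = CV 1 \<and> hi = 2*k"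
      then have "{PV (2*k), CV 1} \<in> CE" using that by auto
      then show False using na \<open>z = CV 1 \<and> hi = 2*k\<close> by blast
    qed
    ultimately show ?thesis using nbPV[OF that] na that by auto
  qed
  show False
  proof (cases "hi = 0")
    case True then show False using one1[OF hi_in, of "CV 0"] nb' by auto
  next
    case False then show False using one1[OF hi_in, of "PV (hi-1)"] nb' by auto
  qed
qed

lemma HB_S: "HB \<in> S"
proof -
  consider "{PV lo, HB} \<in> CE" | "{PV hi, HB} \<in> CE" | "hi = 2*k" "{PV (2*k), CV 1} \<in> CE"
    using lo_exit hi_exit by blast
  then show ?thesis
  proof cases
    case 3 then have "{HB, CV 4} \<in> CE" using par by blast
    then show ?thesis by (rule inS)
  qed (blast intro: inS2)+
qed

lemma hex_ok: "\<exists>H\<in>Hs. \<forall>i<6. CV i \<in> S \<longleftrightarrow> CV i \<notin> \<Union>H"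
proof -
  note F0 = hexF0 and F1 = hexF1 and F2 = hexF2 and F3 = hexF3 and F4 = hexF4 and F5 = hexF5
  have hS: "HB \<in> S" by (rule HB_S)
  show ?thesis
  proof (cases "{CV 0, PV 0} \<in> CE")
    case p0: True
    have lo0: "lo = 0" using lo_min[OF inS2[OF p0]] by simp
    show ?thesis
    proof (cases "{PV (2*k), CV 1} \<in> CE")
      case p1: True
      have hi2k: "hi = 2*k" using hi_max[OF inS[OF p1]] lohi by simp
      have h4: "{HB, CV 4} \<in> CE" using par p1 by blast
      have noPV: "{HB, PV x} \<notin> CE" for x
      proof
        assume a: "{HB, PV x} \<in> CE"
        then have a': "{PV x, HB} \<in> CE" using sym by blast
        have p0': "{PV 0, CV 0} \<in> CE" using p0 sym by blast
        from HBnb[OF a] lo0 hi2k have "x = 0 \<or> x = 2*k" by simp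
        then show False
        proof
          assume x0: "x = 0"
          show False
          proof (cases "k = 0")
            case True
            then have "{PV 0, CV 1} \<in> CE" using p1 by simp
            then show False using deg3[of "PV 0" "CV 0" "CV 1" HB] p0' a' x0 by simp
          next
            case False
            then have "{PV 0, PV 1} \<in> CE" using lo_next lo0 hi2k by simp
            then show False using deg3[of "PV 0" "CV 0" "PV 1" HB] p0' a' x0 by simp
          qed
        next
          assume x2: "x = 2*k"
          show False
          proof (cases "k = 0")
            case True
            then have "{PV 0, CV 1} \<in> CE" using p1 by simp
            then show False using deg3[of "PV 0" "CV 0" "CV 1" HB] p0' a' x2 True by simp
          next
            case False
            then have "{PV (2*k), PV (2*k-1)} \<in> CE" using hi_prev lo0 hi2k by simp
            then show False using deg3[of "PV (2*k)" "CV 1" "PV (2*k-1)" HB] p1 a' x2 by simp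
          qed
        qed
      qed
      have "\<And>z. {HB, z} \<in> CE \<Longrightarrow> z = CV 4 \<or> z = CV 3" using nbHB noPV by blast
      then have h3: "{HB, CV 3} \<in> CE" using two2[OF hS] by blast
      show ?thesis
      proof (cases "{CV 0, CV 1} \<in> CE")
        case e01: True
        have "\<not> {CV 5, CV 0} \<in> CE" using F0 e01 p0 by blast
        have e12: "\<not> {CV 1, CV 2} \<in> CE" using F1 e01 p1 by blast
        have e23: "\<not> {CV 2, CV 3} \<in> CE" using F2 e12 by blast
        have e34: "{CV 3, CV 4} \<in> CE" using F3 e23 h3 by blast
        have c0: "CV 0 \<in> S" using F0 e01 by blast
        define X where "X = {HB, CV 3, CV 4}"
        obtain u w where uw: "{u,w} \<in> CE" "u \<in> X" "w \<notin> X"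
        proof -
          have hX: "HB \<in> X" "CV 0 \<notin> X" unfolding X_def by simp_all
          show ?thesis using cut[OF hS hX(1) c0 hX(2)] that by blast
        qed
        have "u = HB \<or> u = CV 3 \<or> u = CV 4" using uw(2) unfolding X_def by blast
        moreover have "w = CV 4 \<or> w = CV 3" if "u = HB" using exact[OF h4 h3 _ uw(1)[unfolded that]] by simp
        moreover have "w = HB \<or> w = CV 4" if "u = CV 3"
          using exact[of "CV 3" HB "CV 4" w] h3 e34 uw(1) that sym by blast
        moreover have "w = HB \<or> w = CV 3" if "u = CV 4"
          using exact[of "CV 4" HB "CV 3" w] h4 e34 uw(1) that sym by blast
        ultimately show ?thesis using uw(3) unfolding X_def by blast
      next
        case e01: False
        have e50: "{CV 5, CV 0} \<in> CE" and c0: "CV 0 \<in> S" using F0 e01 p0 by blast+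
        have e12: "{CV 1, CV 2} \<in> CE" and c1: "CV 1 \<in> S" using F1 e01 p1 by blast+
        have e23: "{CV 2, CV 3} \<in> CE" and c2: "CV 2 \<in> S" using F2 e12 by blast+
        have c3: "CV 3 \<in> S" using F3 e23 by blast
        have c5: "CV 5 \<in> S" and e45: "{CV 4, CV 5} \<in> CE" using F5 e50 by blast+
        have c4: "CV 4 \<in> S" using F4 e45 by blast
        show ?thesis by (rule hex_conc[of "{}"]) (use c0 c1 c2 c3 c4 c5 in \<open>simp_all add: Hs_def\<close>)
      qed
    next
      case p1: False
      have h4: "{HB, CV 4} \<notin> CE" using par p1 by blast
      have h3: "{HB, CV 3} \<in> CE"
      proof (rule ccontr)
        assume nh3: "{HB, CV 3} \<notin> CE"
        have nbs: "z = PV 0 \<or> z = PV hi" if "{HB, z} \<in> CE" for z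
          using nbHB[OF that] HBnb that h4 nh3 lo0 by blast
        show False
        proof (cases "hi = 0")
          case True then show False using one1[OF hS, of "PV 0"] nbs by auto
        next
          case False
          then have "{PV 0, PV 1} \<in> CE" using lo_next lo0 by simp
          moreover have "{PV 0, HB} \<in> CE" using two2[OF hS nbs] sym by blast
          moreover have "{PV 0, CV 0} \<in> CE" using p0 sym by blast
          ultimately show False using deg3[of "PV 0" "PV 1" HB "CV 0"] by simp
        qed
      qed
      show ?thesis
      proof (cases "{CV 0, CV 1} \<in> CE")
        case e01: True
        have e50: "{CV 5, CV 0} \<notin> CE" and c0: "CV 0 \<in> S" using F0 e01 p0 by blast+
        have e12: "{CV 1, CV 2} \<in> CE" and c1: "CV 1 \<in> S" using F1 e01 p1 by blast+
        have e23: "{CV 2, CV 3} \<in> CE" and c2: "CV 2 \<in> S" using F2 e12 by blast+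
        have e34: "{CV 3, CV 4} \<notin> CE" and c3: "CV 3 \<in> S" using F3 e23 h3 by blast+
        have c4: "CV 4 \<notin> S" using F4 e34 h4 by blast
        have c5: "CV 5 \<notin> S" using F5 e50 by blast
        show ?thesis by (rule hex_conc[of "{{CV 4, CV 5}}"]) (use c0 c1 c2 c3 c4 c5 in \<open>simp_all add: Hs_def\<close>)
      next
        case e01: False
        have e50: "{CV 5, CV 0} \<in> CE" and c0: "CV 0 \<in> S" using F0 e01 p0 by blast+
        have c1: "CV 1 \<notin> S" and e12: "{CV 1, CV 2} \<notin> CE" using F1 e01 p1 by blast+
        have c2: "CV 2 \<notin> S" and e23: "{CV 2, CV 3} \<notin> CE" using F2 e12 by blast+
        have c5: "CV 5 \<in> S" and e45: "{CV 4, CV 5} \<in> CE" using F5 e50 by blast+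
        have c4: "CV 4 \<in> S" using F4 e45 by blast
        have c3: "CV 3 \<in> S" using F3 h3 by blast
        show ?thesis by (rule hex_conc[of "{{CV 1, CV 2}}"]) (use c0 c1 c2 c3 c4 c5 in \<open>simp_all add: Hs_def\<close>)
      qed
    qed
  next
    case p0: False
    have loex: "{PV lo, HB} \<in> CE" using lo_exit p0 by blast
    show ?thesis
    proof (cases "{PV (2*k), CV 1} \<in> CE")
      case p1: True
      have h4: "{HB, CV 4} \<in> CE" using par p1 by blast
      have h3: "{HB, CV 3} \<notin> CE"
      proof
        assume "{HB, CV 3} \<in> CE"
        then show False using deg3[of HB "CV 4" "CV 3" "PV lo"] h4 loex sym by force
      qed
      show ?thesis
      proof (cases "{CV 0, CV 1} \<in> CE")
        case e01: True
        have e50: "{CV 5, CV 0} \<in> CE" and c0: "CV 0 \<in> S" using F0 e01 p0 by blast+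
        have e12: "{CV 1, CV 2} \<notin> CE" and c1: "CV 1 \<in> S" using F1 e01 p1 by blast+
        have e23: "{CV 2, CV 3} \<notin> CE" and c2: "CV 2 \<notin> S" using F2 e12 by blast+
        have c3: "CV 3 \<notin> S" using F3 e23 h3 by blast
        have c5: "CV 5 \<in> S" and e45: "{CV 4, CV 5} \<in> CE" using F5 e50 by blast+
        have c4: "CV 4 \<in> S" using F4 e45 by blast
        show ?thesis by (rule hex_conc[of "{{CV 2, CV 3}}"]) (use c0 c1 c2 c3 c4 c5 in \<open>simp_all add: Hs_def\<close>)
      next
        case e01: False
        have c0: "CV 0 \<notin> S" and e50: "{CV 5, CV 0} \<notin> CE" using F0 e01 p0 by blast+
        have e12: "{CV 1, CV 2} \<in> CE" and c1: "CV 1 \<in> S" using F1 e01 p1 by blast+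
        have e23: "{CV 2, CV 3} \<in> CE" and c2: "CV 2 \<in> S" using F2 e12 by blast+
        have c3: "CV 3 \<in> S" using F3 e23 by blast
        have c5: "CV 5 \<notin> S" using F5 e50 by blast
        have c4: "CV 4 \<in> S" using F4 h4 by blast
        show ?thesis by (rule hex_conc[of "{{CV 5, CV 0}}"]) (use c0 c1 c2 c3 c4 c5 in \<open>simp_all add: Hs_def\<close>)
      qed
    next
      case p1: False
      have h4: "{HB, CV 4} \<notin> CE" using par p1 by blast
      have hiex: "{PV hi, HB} \<in> CE" using hi_exit p1 by blast
      have "lo \<noteq> hi"
      proof
        assume eq: "lo = hi"
        have "z = HB" if "{PV lo, z} \<in> CE" for z
        proof -
          have "z \<noteq> PV (lo+1)"
          proof
            assume "z = PV (lo+1)" then have "PV (lo+1) \<in> S" using inS2[OF that] by simp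
            then show False using hi_max eq by fastforce
          qed
          moreover have "z \<noteq> PV (lo-1) \<or> lo = 0"
          proof (rule ccontr)
            assume "\<not> (z \<noteq> PV (lo - 1) \<or> lo = 0)"
            then have "z = PV (lo-1)" "lo \<noteq> 0" by auto
            then have "PV (lo-1) \<in> S" using inS2[OF that] by simp
            then show False using lo_min \<open>lo \<noteq> 0\<close> by fastforce
          qed
          moreover have "\<not> (z = CV 0 \<and> lo = 0)"
          proof
            assume zz: "z = CV 0 \<and> lo = 0"
            then have "{PV 0, CV 0} \<in> CE" using that by simp
            then show False using p0 sym by blast
          qed
          moreover have "\<not> (z = CV 1 \<and> lo = 2*k)" using p1 that by auto
          ultimately show ?thesis using nbPV[OF that] by auto
        qed
        then show False using one1[OF lo_in] by blast
      qed
      have h3: "{HB, CV 3} \<notin> CE"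
      proof
        assume "{HB, CV 3} \<in> CE"
        then show False using deg3[of HB "PV lo" "PV hi" "CV 3"] \<open>lo \<noteq> hi\<close> loex hiex sym by force
      qed
      show ?thesis
      proof (cases "CV 0 \<in> S")
        case c0: True
        have e01: "{CV 0, CV 1} \<in> CE" and e50: "{CV 5, CV 0} \<in> CE" using F0 c0 p0 by blast+
        have c1: "CV 1 \<in> S" and e12: "{CV 1, CV 2} \<in> CE" using F1 e01 p1 by blast+
        have c2: "CV 2 \<in> S" and e23: "{CV 2, CV 3} \<in> CE" using F2 e12 by blast+
        have c5: "CV 5 \<in> S" and e45: "{CV 4, CV 5} \<in> CE" using F5 e50 by blast+
        have c3: "CV 3 \<in> S" using F3 e23 by blast
        have c4: "CV 4 \<in> S" using F4 e45 by blast
        show ?thesis by (rule hex_conc[of "{}"]) (use c0 c1 c2 c3 c4 c5 in \<open>simp_all add: Hs_def\<close>)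
      next
        case c0: False
        have e01: "{CV 0, CV 1} \<notin> CE" and e50: "{CV 5, CV 0} \<notin> CE" using F0 c0 by blast+
        have c1: "CV 1 \<notin> S" and e12: "{CV 1, CV 2} \<notin> CE" using F1 e01 p1 by blast+
        have c2: "CV 2 \<notin> S" and e23: "{CV 2, CV 3} \<notin> CE" using F2 e12 by blast+
        have c5: "CV 5 \<notin> S" and e45: "{CV 4, CV 5} \<notin> CE" using F5 e50 by blast+
        have c3: "CV 3 \<notin> S" using F3 e23 h3 by blast
        have c4: "CV 4 \<notin> S" using F4 e45 h4 by blast
        show ?thesis by (rule hex_conc[of "{{CV 0, CV 1}, {CV 2, CV 3}, {CV 4, CV 5}}"])
          (use c0 c1 c2 c3 c4 c5 in \<open>simp_all add: Hs_def\<close>)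
      qed
    qed
  qed
qed

end

context cdata
begin

lemma noP:
  assumes nP: "\<And>x. PV x \<notin> S"
  shows "S = {CV i | i. i < 6}"
proof -
  have p0: "{CV 0, PV 0} \<notin> CE" using nP inS2 by blast
  have p1: "{PV (2*k), CV 1} \<notin> CE" using nP inS by blast
  have h4: "{HB, CV 4} \<notin> CE" using par p1 by blast
  have hS: "HB \<notin> S"
  proof
    assume hS: "HB \<in> S"
    have "z = CV 3" if "{HB, z} \<in> CE" for z
      using nbHB[OF that] h4 that nP inS2 by blast
    then show False using one1[OF hS] by blast
  qed
  have h3: "{HB, CV 3} \<notin> CE" using hS inS by blast
  have c01: "CV 0 \<in> S \<longleftrightarrow> CV 1 \<in> S" using hexF0 hexF1 p0 p1 by blast
  have c12: "CV 1 \<in> S \<longleftrightarrow> CV 2 \<in> S" using hexF1 hexF2 p1 by blast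
  have c23: "CV 2 \<in> S \<longleftrightarrow> CV 3 \<in> S" using hexF2 hexF3 h3 by blast
  have c34: "CV 3 \<in> S \<longleftrightarrow> CV 4 \<in> S" using hexF3 hexF4 h3 h4 by blast
  have c45: "CV 4 \<in> S \<longleftrightarrow> CV 5 \<in> S" using hexF4 hexF5 h4 by blast
  have sub: "S \<subseteq> {CV i | i. i < 6}"
  proof
    fix v assume v: "v \<in> S"
    then have "v \<in> g3_V k" using SV by blast
    then show "v \<in> {CV i | i. i < 6}"
    proof (cases rule: V_casesE)
      case (p x) then show ?thesis using v nP by blast
    next
      case h then show ?thesis using v hS by blast
    qed blast
  qed
  obtain v where "v \<in> S" using ne by blast
  then obtain i where i: "i < 6" "CV i \<in> S" using sub by blast
  have "CV 0 \<in> S" using six_cases[OF i(1)] i(2) c01 c12 c23 c34 c45 by auto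
  then have all: "CV j \<in> S" if "j < 6" for j using six_cases[OF that] c01 c12 c23 c34 c45 by auto
  show ?thesis using sub all by blast
qed

lemma main_pm: "has_perfect_matching (g3_V k - S) (del_verts_E (g3_E k) S)"
proof (cases "\<exists>x. PV x \<in> S")
  case False
  then show ?thesis using noP pm_build0 by blast
next
  case True
  define A where "A = {x. PV x \<in> S}"
  have fA: "finite A" unfolding A_def using PV_le finite_subset[of _ "{..2*k}"] by (auto intro: finite_subset[of _ "{..2*k}"])
  have neA: "A \<noteq> {}" using True unfolding A_def by blast
  interpret ci: cint k S CE "Min A" "Max A"
  proof
    show "PV (Min A) \<in> S" using Min_in[OF fA neA] unfolding A_def by blast
    show "PV (Max A) \<in> S" using Max_in[OF fA neA] unfolding A_def by blast
    show "\<And>x. PV x \<in> S \<Longrightarrow> Min A \<le> x" using Min_le[OF fA] unfolding A_def by blast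
    show "\<And>x. PV x \<in> S \<Longrightarrow> x \<le> Max A" using Max_ge[OF fA] unfolding A_def by blast
  qed
  obtain H where H: "H \<in> Hs" "\<And>i. i < 6 \<Longrightarrow> CV i \<in> S \<longleftrightarrow> CV i \<notin> \<Union>H" using ci.hex_ok by blast
  show ?thesis
    by (rule pm_build[OF ci.lohi(1) ci.ev_lo ci.ev_hi ci.lohi(2) ci.PS ci.HB_S H])
qed

end

lemma cycle_pm:
  assumes cyc: "even_cycle (g3_V k) (g3_E k) cs"
  shows "has_perfect_matching (g3_V k - set cs) (del_verts_E (g3_E k) (set cs))"
proof -
  have c: "is_cycle (g3_V k) (g3_E k) cs" and ev: "even (length cs)" using cyc unfolding even_cycle_def by auto
  interpret cdata k "set cs" "cedges cs"
  proof
    show "cedges cs \<subseteq> g3_E k" by (rule cyc_E[OF c])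
    show "set cs \<subseteq> g3_V k" using c unfolding is_cycle_def by blast
    show "\<And>v. v \<in> set cs \<Longrightarrow> \<exists>x y. x \<noteq> y \<and> {v,x} \<in> cedges cs \<and> {v,y} \<in> cedges cs \<and> (\<forall>z. {v,z} \<in> cedges cs \<longrightarrow> z = x \<or> z = y)"
      by (rule cyc_nbrs[OF c])
    show "\<And>v z. v \<notin> set cs \<Longrightarrow> {v,z} \<notin> cedges cs" by (rule cyc_notin)
    show "\<And>X a b. a \<in> set cs \<Longrightarrow> a \<in> X \<Longrightarrow> b \<in> set cs \<Longrightarrow> b \<notin> X \<Longrightarrow>
       \<exists>x1 y1 x2 y2. {x1,y1} \<in> cedges cs \<and> {x2,y2} \<in> cedges cs \<and> x1 \<in> X \<and> x2 \<in> X \<and> y1 \<notin> X \<and> y2 \<notin> X \<and> (x1 \<noteq> x2 \<or> y1 \<noteq> y2)"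
      by (rule cyc_cut[OF c])
    show "{HB, CV 4} \<in> cedges cs \<longleftrightarrow> {PV (2*k), CV 1} \<in> cedges cs" by (rule par_model[OF c ev])
    show "set cs \<noteq> {}" using c unfolding is_cycle_def by auto
  qed
  show ?thesis by (rule main_pm)
qed

lemma pm_full:
  assumes m: "even m" "m \<le> 2*k" and XE: "X \<subseteq> g3_E k"
    and Xcov: "\<And>v. v \<in> g3_V k \<Longrightarrow> (\<And>x. v = PV x \<Longrightarrow> x = m) \<Longrightarrow> \<exists>e\<in>X. v \<in> e"
    and Xdisj: "\<And>e1 e2. e1 \<in> X \<Longrightarrow> e2 \<in> X \<Longrightarrow> e1 \<noteq> e2 \<Longrightarrow> e1 \<inter> e2 = {}"
    and XPV: "\<And>e x. e \<in> X \<Longrightarrow> PV x \<in> e \<Longrightarrow> x = m"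
  shows "perfect_matching (g3_V k) (g3_E k) (ppairs m m k \<union> X)"
proof (rule pm_intro)
  show "ppairs m m k \<union> X \<subseteq> g3_E k" using ppairs_E[OF m(2) order_refl] XE by blast
next
  fix v assume v: "v \<in> g3_V k"
  show "\<exists>e\<in>ppairs m m k \<union> X. v \<in> e"
  proof (cases "\<exists>x. v = PV x \<and> x \<noteq> m")
    case True
    then obtain x where x: "v = PV x" "x \<noteq> m" by blast
    then have "x \<le> 2*k" using v unfolding g3_V_def by auto
    then have "x < m \<or> m < x" using x(2) by auto
    then show ?thesis using ppairs_cover[OF order_refl m(1) m(1) m(2) \<open>x \<le> 2*k\<close>] x(1) by blast
  next
    case False
    then have "\<And>x. v = PV x \<Longrightarrow> x = m" by blast
    then show ?thesis using Xcov[OF v] by blast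
  qed
next
  fix e1 e2 assume e: "e1 \<in> ppairs m m k \<union> X" "e2 \<in> ppairs m m k \<union> X" "e1 \<noteq> e2"
  have PX: "a \<inter> b = {}" if A: "a \<in> ppairs m m k" "b \<in> X" for a b
  proof (rule ccontr)
    assume "a \<inter> b \<noteq> {}"
    then obtain v where v: "v \<in> a" "v \<in> b" by blast
    obtain x where "v = PV x" "x < m \<or> m < x" using ppairs_PV[OF m(1) A(1) v(1)] by blast
    then show False using XPV[OF A(2)] v(2) by fastforce
  qed
  show "e1 \<inter> e2 = {}"
  proof (cases "e1 \<in> X")
    case True
    show ?thesis
    proof (cases "e2 \<in> X")
      case True then show ?thesis using Xdisj \<open>e1 \<in> X\<close> e(3) by blast
    next
      case False then have "e2 \<in> ppairs m m k" using e by blast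
      then show ?thesis using PX[OF _ \<open>e1 \<in> X\<close>] by blast
    qed
  next
    case False
    then have p1: "e1 \<in> ppairs m m k" using e by blast
    show ?thesis
    proof (cases "e2 \<in> X")
      case True then show ?thesis using PX[OF p1 True] by blast
    next
      case False then have "e2 \<in> ppairs m m k" using e by blast
      then show ?thesis using ppairs_disj[OF order_refl p1 _ e(3)] by blast
    qed
  qed
qed

lemma E_x: "{HB, CV 4} \<in> g3_E k" "{PV (2*k), CV 1} \<in> g3_E k" "{CV 3, HB} \<in> g3_E k" "{CV 0, PV 0} \<in> g3_E k"
  unfolding g3_E_def by (rule UnI2; simp)+

lemma six_cases': "i < 6 \<Longrightarrow> i = 0 \<or> i = 1 \<or> i = 2 \<or> i = 3 \<or> i = 4 \<or> i = (5::nat)"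
  by arith

lemma in_hub:
  assumes "even m" "m \<le> 2*k" "H0 = {{CV 0, CV 1}, {CV 2, CV 3}, {CV 4, CV 5}} \<or> H0 = {{CV 1, CV 2}, {CV 3, CV 4}, {CV 5, CV 0}}"
  shows "perfect_matching (g3_V k) (g3_E k) (ppairs m m k \<union> ({{HB, PV m}} \<union> H0))"
proof (rule pm_full[OF assms(1,2)])
  show "{{HB, PV m}} \<union> H0 \<subseteq> g3_E k" using assms(3)
    using E_hub[OF assms(1,2)] E_hexs by (elim disjE) blast+
next
  fix v assume v: "v \<in> g3_V k" "\<And>x. v = PV x \<Longrightarrow> x = m"
  from v(1) show "\<exists>e\<in>{{HB, PV m}} \<union> H0. v \<in> e"
  proof (cases rule: V_casesE)
    case (c i) then show ?thesis using six_cases'[OF c(1)] assms(3) by (elim disjE; simp)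
  next
    case (p x) then show ?thesis using v(2) by auto
  qed simp
next
  fix e1 e2 assume "e1 \<in> {{HB, PV m}} \<union> H0" "e2 \<in> {{HB, PV m}} \<union> H0" "e1 \<noteq> e2"
  then show "e1 \<inter> e2 = {}" using assms(3) by auto
next
  fix e x assume "e \<in> {{HB, PV m}} \<union> H0" "PV x \<in> e"
  then show "x = m" using assms(3) by auto
qed

lemma in_x1:
  "perfect_matching (g3_V k) (g3_E k) (ppairs (2*k) (2*k) k \<union> {{HB, CV 4}, {CV 5, CV 0}, {CV 2, CV 3}, {PV (2*k), CV 1}})"
proof (rule pm_full)
  show "{{HB, CV 4}, {CV 5, CV 0}, {CV 2, CV 3}, {PV (2*k), CV 1}} \<subseteq> g3_E k"
    using E_hexs E_x by (intro insert_subsetI empty_subsetI)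
next
  fix v assume v: "v \<in> g3_V k" "\<And>x. v = PV x \<Longrightarrow> x = 2*k"
  from v(1) show "\<exists>e\<in>{{HB, CV 4}, {CV 5, CV 0}, {CV 2, CV 3}, {PV (2*k), CV 1}}. v \<in> e"
  proof (cases rule: V_casesE)
    case (c i) then show ?thesis using six_cases'[OF c(1)] by (elim disjE; simp)
  next
    case (p x) then show ?thesis using v(2) by auto
  qed simp
next
  fix e1 e2 assume "e1 \<in> {{HB, CV 4}, {CV 5, CV 0}, {CV 2, CV 3}, {PV (2*k), CV 1}}"
    "e2 \<in> {{HB, CV 4}, {CV 5, CV 0}, {CV 2, CV 3}, {PV (2*k), CV 1}}" "e1 \<noteq> e2"
  then show "e1 \<inter> e2 = {}" by auto
next
  fix e x assume "e \<in> {{HB, CV 4}, {CV 5, CV 0}, {CV 2, CV 3}, {PV (2*k), CV 1}}" "PV x \<in> e"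
  then show "x = 2*k" by auto
qed simp_all

lemma in_x3:
  "perfect_matching (g3_V k) (g3_E k) (ppairs 0 0 k \<union> {{CV 3, HB}, {CV 4, CV 5}, {CV 1, CV 2}, {CV 0, PV 0}})"
proof (rule pm_full)
  show "{{CV 3, HB}, {CV 4, CV 5}, {CV 1, CV 2}, {CV 0, PV 0}} \<subseteq> g3_E k"
    using E_hexs E_x by (intro insert_subsetI empty_subsetI)
next
  fix v assume v: "v \<in> g3_V k" "\<And>x. v = PV x \<Longrightarrow> x = 0"
  from v(1) show "\<exists>e\<in>{{CV 3, HB}, {CV 4, CV 5}, {CV 1, CV 2}, {CV 0, PV 0}}. v \<in> e"
  proof (cases rule: V_casesE)
    case (c i) then show ?thesis using six_cases'[OF c(1)] by (elim disjE; simp)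
  next
    case (p x) then show ?thesis using v(2) by auto
  qed simp
next
  fix e1 e2 assume "e1 \<in> {{CV 3, HB}, {CV 4, CV 5}, {CV 1, CV 2}, {CV 0, PV 0}}"
    "e2 \<in> {{CV 3, HB}, {CV 4, CV 5}, {CV 1, CV 2}, {CV 0, PV 0}}" "e1 \<noteq> e2"
  then show "e1 \<inter> e2 = {}" by auto
next
  fix e x assume "e \<in> {{CV 3, HB}, {CV 4, CV 5}, {CV 1, CV 2}, {CV 0, PV 0}}" "PV x \<in> e"
  then show "x = 0" by auto
qed simp_all

lemma g3_V_img: "g3_V k = CV ` {..<6} \<union> PV ` {..2*k} \<union> {HB}"
  unfolding g3_V_def by auto

lemma rt_sym:
  assumes "(\<lambda>a b. {a, b} \<in> E)\<^sup>*\<^sup>* x y"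
  shows "(\<lambda>a b. {a, b} \<in> E)\<^sup>*\<^sup>* y x"
  using assms
proof (induction rule: rtranclp_induct)
  case base then show ?case by simp
next
  case (step y z)
  then have "{z, y} \<in> E" by (simp add: insert_commute)
  then show ?case using step(3) by (rule converse_rtranclp_into_rtranclp)
qed

lemma model_conn: "graph_connected (g3_V k) (g3_E k)"
proof -
  let ?R = "\<lambda>a b. {a, b} \<in> g3_E k"
  have "{HB, PV 0} \<in> g3_E k" by (rule E_hub) simp_all
  then have pv0: "?R\<^sup>*\<^sup>* HB (PV 0)" by (rule r_into_rtranclp)
  have pv: "?R\<^sup>*\<^sup>* HB (PV x)" if "x \<le> 2*k" for x
    using that
  proof (induction x)
    case 0 show ?case by (rule pv0)
  next
    case (Suc x)
    then have "?R (PV x) (PV (Suc x))" using E_path[of x k] by simp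
    then show ?case using Suc by (meson Suc_leD rtranclp.rtrancl_into_rtrancl)
  qed
  have e0: "?R (PV 0) (CV 0)" using E_x(4)[of k] by (simp add: insert_commute)
  have c0: "?R\<^sup>*\<^sup>* HB (CV 0)" using pv[of 0] e0 by (meson le0 rtranclp.rtrancl_into_rtrancl)
  have c1: "?R\<^sup>*\<^sup>* HB (CV 1)" using c0 E_hexs(1)[of k] by (meson rtranclp.rtrancl_into_rtrancl)
  have c2: "?R\<^sup>*\<^sup>* HB (CV 2)" using c1 E_hexs(2)[of k] by (meson rtranclp.rtrancl_into_rtrancl)
  have c3: "?R\<^sup>*\<^sup>* HB (CV 3)" using c2 E_hexs(3)[of k] by (meson rtranclp.rtrancl_into_rtrancl)
  have c4: "?R\<^sup>*\<^sup>* HB (CV 4)" using c3 E_hexs(4)[of k] by (meson rtranclp.rtrancl_into_rtrancl)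
  have c5: "?R\<^sup>*\<^sup>* HB (CV 5)" using c4 E_hexs(5)[of k] by (meson rtranclp.rtrancl_into_rtrancl)
  have all: "?R\<^sup>*\<^sup>* HB v" if "v \<in> g3_V k" for v
    using that
  proof (cases rule: V_casesE)
    case (c i)
    have "?R\<^sup>*\<^sup>* HB (CV i)" using six_cases'[OF c(1)] by (elim disjE) (simp_all only: c0 c1 c2 c3 c4 c5)
    then show ?thesis using c(2) by simp
  next
    case (p x) then show ?thesis using pv by simp
  qed simp
  show ?thesis unfolding graph_connected_def
  proof (intro ballI)
    fix x y assume "x \<in> g3_V k" "y \<in> g3_V k"
    then have hx: "?R\<^sup>*\<^sup>* HB x" and "?R\<^sup>*\<^sup>* HB y" using all by blast+
    from hx have "?R\<^sup>*\<^sup>* x HB" by (rule rt_sym)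
    then show "?R\<^sup>*\<^sup>* x y" using \<open>?R\<^sup>*\<^sup>* HB y\<close> by (rule rtranclp_trans)
  qed
qed

lemma model_mc: "matching_covered (g3_V k) (g3_E k)"
  unfolding matching_covered_def
proof (intro conjI)
  show "simple_graph (g3_V k) (g3_E k)" unfolding simple_graph_def
    using E_sub_V by (simp add: g3_V_img)
  show "graph_connected (g3_V k) (g3_E k)" by (rule model_conn)
  have "{CV 0, CV 1} \<subseteq> g3_V k" using V_mem(1)[of 0 k] V_mem(1)[of 1 k] by simp
  moreover have "finite (g3_V k)" by (simp add: g3_V_img)
  ultimately have "card {CV 0, CV 1} \<le> card (g3_V k)" by (rule card_mono[rotated])
  then show "2 \<le> card (g3_V k)" by simp
  show "\<forall>e\<in>g3_E k. \<exists>M. perfect_matching (g3_V k) (g3_E k) M \<and> e \<in> M"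
  proof
    fix e assume "e \<in> g3_E k"
    then show "\<exists>M. perfect_matching (g3_V k) (g3_E k) M \<and> e \<in> M"
    proof (cases rule: g3_E_cases)
      case (hex i)
      let ?A = "{{CV 0, CV 1}, {CV 2, CV 3}, {CV 4, CV 5}}"
      let ?B = "{{CV 1, CV 2}, {CV 3, CV 4}, {CV 5, CV 0}}"
      have "e \<in> {{CV i, CV ((i + 1) mod 6)} | i. i < 6}" using hex by blast
      then have "e \<in> {{CV 0, CV 1}, {CV 1, CV 2}, {CV 2, CV 3}, {CV 3, CV 4}, {CV 4, CV 5}, {CV 5, CV 0}}"
        unfolding hex_expl .
      then have "e \<in> ?A \<or> e \<in> ?B" by (elim insertE emptyE) (simp_all only: insert_iff simp_thms)
      then show ?thesis
      proof
        assume "e \<in> ?A"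
        have pm: "perfect_matching (g3_V k) (g3_E k) (ppairs 0 0 k \<union> ({{HB, PV 0}} \<union> ?A))"
          by (rule in_hub) simp_all
        show ?thesis by (rule exI[of _ "ppairs 0 0 k \<union> ({{HB, PV 0}} \<union> ?A)"]) (use pm \<open>e \<in> ?A\<close> in blast)
      next
        assume "e \<in> ?B"
        have pm: "perfect_matching (g3_V k) (g3_E k) (ppairs 0 0 k \<union> ({{HB, PV 0}} \<union> ?B))"
          by (rule in_hub) simp_all
        show ?thesis by (rule exI[of _ "ppairs 0 0 k \<union> ({{HB, PV 0}} \<union> ?B)"]) (use pm \<open>e \<in> ?B\<close> in blast)
      qed
    next
      case (path j)
      let ?A = "{{CV 0, CV 1}, {CV 2, CV 3}, {CV 4, CV 5}}"
      show ?thesis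
      proof (cases "even j")
        case True
        then have "e \<in> ppairs (2*k) (2*k) k" using path unfolding ppairs_def by blast
        moreover have pm: "perfect_matching (g3_V k) (g3_E k) (ppairs (2*k) (2*k) k \<union> ({{HB, PV (2*k)}} \<union> ?A))"
          by (rule in_hub) simp_all
        ultimately show ?thesis by blast
      next
        case False
        then have "e \<in> ppairs 0 0 k" using path unfolding ppairs_def by auto
        moreover have pm: "perfect_matching (g3_V k) (g3_E k) (ppairs 0 0 k \<union> ({{HB, PV 0}} \<union> ?A))"
          by (rule in_hub) simp_all
        ultimately show ?thesis by blast
      qed
    next
      case (hub j)
      let ?A = "{{CV 0, CV 1}, {CV 2, CV 3}, {CV 4, CV 5}}"
      have pm: "perfect_matching (g3_V k) (g3_E k) (ppairs (2*j) (2*j) k \<union> ({{HB, PV (2*j)}} \<union> ?A))"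
        by (rule in_hub) (use hub in simp_all)
      then show ?thesis using hub(2) by blast
    next
      case x1 then show ?thesis using in_x1[of k] by blast
    next
      case x2 then show ?thesis using in_x1[of k] by blast
    next
      case x3 then show ?thesis using in_x3[of k] by blast
    next
      case x4 then show ?thesis using in_x3[of k] by blast
    qed
  qed
qed

lemma pm_image:
  assumes inj: "inj_on f V0" and sub: "V1 \<subseteq> V0" and eV: "\<And>e. e \<in> M \<Longrightarrow> e \<subseteq> V0"
    and pm: "perfect_matching V1 E1 M"
  shows "perfect_matching (f ` V1) ((\<lambda>e. f ` e) ` E1) ((\<lambda>e. f ` e) ` M)"
  unfolding perfect_matching_def
proof (intro conjI ballI)
  show "(\<lambda>e. f ` e) ` M \<subseteq> (\<lambda>e. f ` e) ` E1" using pm unfolding perfect_matching_def by blast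
next
  fix v' assume "v' \<in> f ` V1"
  then obtain v where v: "v \<in> V1" "v' = f v" by blast
  obtain e where e: "e \<in> M" "v \<in> e" and u: "\<And>e'. e' \<in> M \<Longrightarrow> v \<in> e' \<Longrightarrow> e' = e"
    using pm v(1) unfolding perfect_matching_def by metis
  show "\<exists>!e'. e' \<in> (\<lambda>e. f ` e) ` M \<and> v' \<in> e'"
  proof (rule ex1I[of _ "f ` e"])
    show "f ` e \<in> (\<lambda>e. f ` e) ` M \<and> v' \<in> f ` e" using e v(2) by blast
  next
    fix e' assume a: "e' \<in> (\<lambda>e. f ` e) ` M \<and> v' \<in> e'"
    then obtain e1 where e1: "e1 \<in> M" "e' = f ` e1" by blast
    then obtain w where w: "w \<in> e1" "f w = f v" using a v(2) by auto
    have "w \<in> V0" "v \<in> V0" using eV[OF e1(1)] w(1) sub v(1) by blast+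
    then have "w = v" using inj w(2) unfolding inj_on_def by blast
    then have "e1 = e" using u e1(1) w(1) by blast
    then show "e' = f ` e" using e1(2) by simp
  qed
qed

lemma pm_mono: "perfect_matching V E M \<Longrightarrow> E \<subseteq> E' \<Longrightarrow> perfect_matching V E' M"
  unfolding perfect_matching_def by blast

lemma rt_map:
  assumes "(\<lambda>a b. {a, b} \<in> E0)\<^sup>*\<^sup>* x y"
  shows "(\<lambda>a b. {a, b} \<in> (\<lambda>e. f ` e) ` E0)\<^sup>*\<^sup>* (f x) (f y)"
  using assms
proof (induction rule: rtranclp_induct)
  case base then show ?case by simp
next
  case (step y z)
  have "f ` {y, z} \<in> (\<lambda>e. f ` e) ` E0" using step(2) by blast
  then have "{f y, f z} \<in> (\<lambda>e. f ` e) ` E0" by simp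
  then show ?case using step(3) by (rule rtranclp.rtrancl_into_rtrancl[rotated])
qed

lemma iso_transfer:
  fixes f :: "'b \<Rightarrow> 'a"
  assumes bij: "bij_betw f V0 V" and EE: "E = (\<lambda>e. f ` e) ` E0"
    and mc: "matching_covered V0 E0"
    and cyc: "\<And>cs. even_cycle V0 E0 cs \<Longrightarrow> has_perfect_matching (V0 - set cs) (del_verts_E E0 (set cs))"
  shows "cycle_extendable V E"
proof -
  have inj: "inj_on f V0" and fV: "f ` V0 = V" using bij unfolding bij_betw_def by auto
  have sg: "simple_graph V0 E0" and conn: "graph_connected V0 E0" and c2: "card V0 \<ge> 2"
    and pms: "\<And>e. e \<in> E0 \<Longrightarrow> \<exists>M. perfect_matching V0 E0 M \<and> e \<in> M"
    using mc unfolding matching_covered_def by auto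
  have fin: "finite V0" using sg by (simp add: simple_graph_def)
  have eV0: "e \<subseteq> V0" if "e \<in> E0" for e
  proof -
    have "\<forall>e\<in>E0. \<exists>x y. x \<noteq> y \<and> x \<in> V0 \<and> y \<in> V0 \<and> e = {x, y}" using sg by (simp add: simple_graph_def)
    then have "\<exists>x y. x \<noteq> y \<and> x \<in> V0 \<and> y \<in> V0 \<and> e = {x, y}" using that by (rule bspec)
    then obtain x y where "x \<in> V0" "y \<in> V0" "e = {x,y}" by blast
    then show ?thesis by simp
  qed
  define g where "g = inv_into V0 f"
  have gf: "\<And>x. x \<in> V0 \<Longrightarrow> g (f x) = x" unfolding g_def using inj by (simp add: inv_into_f_f)
  have fg: "\<And>y. y \<in> V \<Longrightarrow> f (g y) = y" unfolding g_def using fV by (auto intro: f_inv_into_f)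
  have gV: "\<And>y. y \<in> V \<Longrightarrow> g y \<in> V0" unfolding g_def using fV by (auto intro: inv_into_into)
  have mcV: "matching_covered V E"
    unfolding matching_covered_def
  proof (intro conjI)
    show "simple_graph V E" unfolding simple_graph_def
    proof (intro conjI ballI)
      show "finite V" using fin fV by blast
    next
      fix e' assume "e' \<in> E"
      then obtain e where e: "e \<in> E0" "e' = f ` e" using EE by blast
      then obtain x y where xy: "x \<noteq> y" "x \<in> V0" "y \<in> V0" "e = {x, y}" using sg unfolding simple_graph_def by blast
      have "f x \<noteq> f y" using inj xy unfolding inj_on_def by blast
      then show "\<exists>x y. x \<noteq> y \<and> x \<in> V \<and> y \<in> V \<and> e' = {x, y}" using xy e(2) fV by blast
    qed
  next
    show "graph_connected V E" unfolding graph_connected_def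
    proof (intro ballI)
      fix x' y' assume "x' \<in> V" "y' \<in> V"
      then obtain x y where "x \<in> V0" "y \<in> V0" "x' = f x" "y' = f y" using fV by blast
      then show "(\<lambda>a b. {a, b} \<in> E)\<^sup>*\<^sup>* x' y'" using conn rt_map[of E0 x y f] EE unfolding graph_connected_def by blast
    qed
  next
    show "2 \<le> card V" using c2 bij_betw_same_card[OF bij] by simp
  next
    show "\<forall>e'\<in>E. \<exists>M. perfect_matching V E M \<and> e' \<in> M"
    proof
      fix e' assume "e' \<in> E"
      then obtain e where e: "e \<in> E0" "e' = f ` e" using EE by blast
      obtain M where M: "perfect_matching V0 E0 M" "e \<in> M" using pms[OF e(1)] by blast
      have "\<And>e. e \<in> M \<Longrightarrow> e \<subseteq> V0" using M(1) eV0 unfolding perfect_matching_def by blast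
      from pm_image[OF inj order_refl this M(1)] have "perfect_matching V E ((\<lambda>e. f ` e) ` M)"
        using fV EE by simp
      then show "\<exists>M. perfect_matching V E M \<and> e' \<in> M" using M(2) e(2) by blast
    qed
  qed
  show ?thesis unfolding cycle_extendable_def
  proof (intro conjI allI impI)
    show "matching_covered V E" by (rule mcV)
  next
    fix cs assume ec: "even_cycle V E cs"
    then have ic: "is_cycle V E cs" and ev: "even (length cs)" unfolding even_cycle_def by auto
    have csV: "set cs \<subseteq> V" using ic unfolding is_cycle_def by blast
    define cs0 where "cs0 = map g cs"
    have gE: "{g a, g b} \<in> E0" if ab: "{a, b} \<in> E" for a b
    proof -
      obtain e where e: "e \<in> E0" "{a, b} = f ` e" using ab EE by blast
      have "g ` {a, b} = g ` f ` e" using e(2) by simp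
      also have "\<dots> = e" using eV0[OF e(1)] gf by (force simp: image_image)
      finally show ?thesis using e(1) by simp
    qed
    have injg: "inj_on g V" unfolding g_def using fV inj_on_inv_into by blast
    have ec0: "even_cycle V0 E0 cs0"
      unfolding even_cycle_def is_cycle_def
    proof (intro conjI allI impI)
      show "3 \<le> length cs0" using ic unfolding cs0_def is_cycle_def by simp
      show "distinct cs0" using ic injg csV unfolding cs0_def is_cycle_def by (simp add: distinct_map inj_on_subset)
      show "set cs0 \<subseteq> V0" using csV gV unfolding cs0_def by auto
      show "even (length cs0)" using ev unfolding cs0_def by simp
    next
      fix i assume i: "i < length cs0"
      then have "{cs ! i, cs ! ((i + 1) mod length cs)} \<in> E" using ic unfolding cs0_def is_cycle_def by simp
      then have "{g (cs ! i), g (cs ! ((i + 1) mod length cs))} \<in> E0" by (rule gE)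
      moreover have "(i + 1) mod length cs < length cs" using i unfolding cs0_def by (intro mod_less_divisor) auto
      ultimately show "{cs0 ! i, cs0 ! ((i + 1) mod length cs0)} \<in> E0" using i unfolding cs0_def by simp
    qed
    have S0: "set cs0 = g ` set cs" unfolding cs0_def by simp
    have fS0: "f ` set cs0 = set cs" unfolding S0 using fg csV by (force simp: image_image)
    obtain M0 where M0: "perfect_matching (V0 - set cs0) (del_verts_E E0 (set cs0)) M0"
      using cyc[OF ec0] unfolding has_perfect_matching_def by blast
    have M0E: "M0 \<subseteq> del_verts_E E0 (set cs0)" using M0 by (simp add: perfect_matching_def)
    have M0V: "e \<subseteq> V0" if em: "e \<in> M0" for e
    proof -
      have "e \<in> E0" using M0E em by (auto simp: del_verts_E_def)
      then show ?thesis by (rule eV0)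
    qed
    have pm1:
      "perfect_matching (f ` (V0 - set cs0)) ((\<lambda>e. f ` e) ` del_verts_E E0 (set cs0)) ((\<lambda>e. f ` e) ` M0)"
      by (rule pm_image[OF inj Diff_subset M0V M0])
    have "f ` (V0 - set cs0) = V - set cs"
    proof -
      have "set cs0 \<subseteq> V0" using ec0 by (simp add: even_cycle_def is_cycle_def)
      then have "f ` (V0 - set cs0) = f ` V0 - f ` set cs0" using inj by (simp add: inj_on_image_set_diff)
      then show ?thesis using fV fS0 by simp
    qed
    moreover have "(\<lambda>e. f ` e) ` del_verts_E E0 (set cs0) \<subseteq> del_verts_E E (set cs)"
    proof
      fix e' assume "e' \<in> (\<lambda>e. f ` e) ` del_verts_E E0 (set cs0)"
      then obtain e where e0: "e \<in> del_verts_E E0 (set cs0)" "e' = f ` e" by blast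
      then have e: "e \<in> E0" "e \<inter> set cs0 = {}" "e' = f ` e" by (simp_all add: del_verts_E_def)
      have "e' \<inter> set cs = {}"
      proof (rule ccontr)
        assume "e' \<inter> set cs \<noteq> {}"
        then obtain v where v: "v \<in> e" "f v \<in> set cs" using e(3) by blast
        have "v \<in> V0" using eV0[OF e(1)] v(1) by blast
        then have "v = g (f v)" using gf by simp
        then have "v \<in> set cs0" using v(2) S0 by blast
        then show False using e(2) v(1) by blast
      qed
      then show "e' \<in> del_verts_E E (set cs)" using e EE unfolding del_verts_E_def by blast
    qed
    ultimately show "has_perfect_matching (V - set cs) (del_verts_E E (set cs))"
      using pm1 pm_mono unfolding has_perfect_matching_def by metis
  qed
qed

theorem proposition5p15:
  fixes V :: "'a set" and E :: "'a set set"
  assumes "in_G3 V E"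
  shows "cycle_extendable V E"
proof -
  from assms obtain k and f :: "g3v \<Rightarrow> 'a" where bij: "bij_betw f (g3_V k) V" and EE: "E = (\<lambda>e. f ` e) ` g3_E k"
    unfolding in_G3_def by blast
  show ?thesis by (rule iso_transfer[OF bij EE model_mc cycle_pm])
qed

end
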